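(* Let $k$ be a field, let $K$ be a simplicial complex with vertex set $V=\{x_1,\dots,x_n\}$, let $R=k[x_1,\dots,x_n]$, and let $I=I(K)$ be the Stanley–Reisner ideal of $K$. If $I$ is generated by $n-t$ elements, then $\widetilde{H}_i(\Delta(R/I);k)=0$ for all $0\leq i\leq t-2$.
   Context: The Stanley–Reisner ideal $I(K)$ is the ideal of $R$ generated by the squarefree monomials $x_{j_1}\cdots x_{j_r}$ such that $\{x_{j_1},\dots,x_{j_r}\}$ is not a face of $K$. $R/I$ is graded with $\mathfrak m$ the ideal of elements of positive degree. For such a graded ring with minimal primes $\mathfrak p_1,\dots,\mathfrak p_m$, $\Delta(R/I)$ is the simplicial complex on $\{1,\dots,m\}$ in which $\{i_0,\dots,i_s\}$ is a face if and only if $\sqrt{\mathfrak p_{i_0}+\cdots+\mathfrak p_{i_s}}\neq\mathfrak m$. $\widetilde{H}_i(-;k)$ is reduced homology with coefficients in $k$. *)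

theory Defs
  imports "HOL-Library.Poly_Mapping" "HOL-Library.Cardinality"
begin

type_synonym ('n, 'k) mpoly = "('n \<Rightarrow>\<^sub>0 nat) \<Rightarrow>\<^sub>0 'k"

definition pvar :: "'n \<Rightarrow> ('n, 'k::comm_ring_1) mpoly" where
  "pvar v = Poly_Mapping.single (Poly_Mapping.single v 1) 1"

definition is_ideal :: "'a::comm_ring_1 set \<Rightarrow> bool" where
  "is_ideal J \<longleftrightarrow> 0 \<in> J \<and> (\<forall>a\<in>J. \<forall>b\<in>J. a + b \<in> J) \<and> (\<forall>r. \<forall>a\<in>J. r * a \<in> J)"

definition ideal_gen :: "'a::comm_ring_1 set \<Rightarrow> 'a set" where
  "ideal_gen S = \<Inter>{J. is_ideal J \<and> S \<subseteq> J}"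

definition is_prime_ideal :: "'a::comm_ring_1 set \<Rightarrow> bool" where
  "is_prime_ideal P \<longleftrightarrow> is_ideal P \<and> P \<noteq> UNIV \<and> (\<forall>a b. a * b \<in> P \<longrightarrow> a \<in> P \<or> b \<in> P)"

definition radical :: "'a::comm_ring_1 set \<Rightarrow> 'a set" where
  "radical J = {f. \<exists>m. f ^ m \<in> J}"

text \<open>Minimal primes of R/I, identified with the primes of R minimal over I.\<close>
definition minimal_primes :: "'a::comm_ring_1 set \<Rightarrow> 'a set set" where
  "minimal_primes I = {P. is_prime_ideal P \<and> I \<subseteq> P \<and>
       (\<forall>Q. is_prime_ideal Q \<and> I \<subseteq> Q \<and> Q \<subseteq> P \<longrightarrow> Q = P)}"

text \<open>The homogeneous maximal ideal (elements of positive degree, i.e. zero constant term).\<close>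
definition irrelevant_ideal :: "('n, 'k::comm_ring_1) mpoly set" where
  "irrelevant_ideal = {f. Poly_Mapping.lookup f 0 = 0}"

definition simplicial_complex_on :: "'n set set \<Rightarrow> 'n set \<Rightarrow> bool" where
  "simplicial_complex_on K V \<longleftrightarrow> (\<forall>F\<in>K. F \<subseteq> V) \<and> (\<forall>F\<in>K. \<forall>G. G \<subseteq> F \<longrightarrow> G \<in> K)
      \<and> (\<forall>v\<in>V. {v} \<in> K)"

definition stanley_reisner_ideal :: "'n::finite set set \<Rightarrow> ('n, 'k::comm_ring_1) mpoly set" where
  "stanley_reisner_ideal K = ideal_gen {(\<Prod>v\<in>F. pvar v) | F. F \<notin> K}"

text \<open>Given an enumeration p_0,...,p_(m-1) of the minimal primes, the simplicial
  complex on {0..<m}: a nonempty set F is a face iff the radical of the sum of the p_i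
  (i in F) is not the irrelevant ideal; the empty face is included.\<close>
definition Delta_complex :: "nat \<Rightarrow> (nat \<Rightarrow> ('n, 'k::comm_ring_1) mpoly set) \<Rightarrow> nat set set" where
  "Delta_complex m p = {F. F \<subseteq> {..<m} \<and>
       (F = {} \<or> radical (ideal_gen (\<Union>i\<in>F. p i)) \<noteq> irrelevant_ideal)}"

text \<open>Chains of cardinality-j faces (i.e. (j-1)-chains), with the empty face in cardinality 0
  giving the augmentation.\<close>
definition chains :: "nat set set \<Rightarrow> nat \<Rightarrow> (nat set \<Rightarrow> 'k::field) set" where
  "chains K j = {c. \<forall>\<sigma>. c \<sigma> \<noteq> 0 \<longrightarrow> \<sigma> \<in> K \<and> card \<sigma> = j}"

definition boundary :: "nat set set \<Rightarrow> (nat set \<Rightarrow> 'k::field) \<Rightarrow> nat set \<Rightarrow> 'k" where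
  "boundary K c \<sigma> = (if \<sigma> \<in> K then
      (\<Sum>v \<in> \<Union>K - \<sigma>. (-1) ^ card {w\<in>\<sigma>. w < v} * c (insert v \<sigma>)) else 0)"

definition reduced_homology_vanishes :: "'k::field itself \<Rightarrow> nat set set \<Rightarrow> nat \<Rightarrow> bool" where
  "reduced_homology_vanishes _ K i \<longleftrightarrow>
     (\<forall>c :: nat set \<Rightarrow> 'k. c \<in> chains K (i + 1) \<and> boundary K c = (\<lambda>_. 0) \<longrightarrow>
        (\<exists>b \<in> chains K (i + 2). boundary K b = c))"

end

theory Submission
  imports Defs "HOL-Library.Function_Algebras" "HOL.Vector_Spaces"
begin


definition sg :: "nat set \<Rightarrow> nat \<Rightarrow> 'k::field" where
  "sg \<sigma> v = (-1) ^ card {w\<in>\<sigma>. w < v}"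

definition dclosed :: "nat set set \<Rightarrow> bool" where
  "dclosed L \<longleftrightarrow> {} \<in> L \<and> finite (\<Union>L) \<and> (\<forall>F\<in>L. \<forall>G. G \<subseteq> F \<longrightarrow> G \<in> L)"

definition hv :: "'k::field itself \<Rightarrow> nat set set \<Rightarrow> nat \<Rightarrow> bool" where
  "hv _ L j \<longleftrightarrow> (\<forall>c :: nat set \<Rightarrow> 'k. c \<in> chains L j \<and> boundary L c = (\<lambda>_. 0) \<longrightarrow>
        (\<exists>b \<in> chains L (Suc j). boundary L b = c))"

lemma boundary_alt: "boundary L c \<sigma> = (if \<sigma> \<in> L then (\<Sum>v \<in> \<Union>L - \<sigma>. sg \<sigma> v * c (insert v \<sigma>)) else 0)"
  by (simp add: boundary_def sg_def)

lemma sg_sq: "sg \<sigma> v * sg \<sigma> v = (1::'k::field)"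
  by (simp add: sg_def power_mult_distrib[symmetric] flip: power_add)

lemma sg_insert:
  assumes "finite \<sigma>" "a \<notin> \<sigma>" "a \<noteq> v"
  shows "sg (insert a \<sigma>) v = (if a < v then - sg \<sigma> v else (sg \<sigma> v :: 'k::field))"
proof -
  have "{w\<in>insert a \<sigma>. w < v} = (if a < v then insert a {w\<in>\<sigma>. w < v} else {w\<in>\<sigma>. w < v})"
    by auto
  then show ?thesis using assms by (auto simp: sg_def)
qed

lemma chains_finite_face:
  assumes "dclosed L" "\<sigma> \<in> L" shows "finite \<sigma>"
  using assms unfolding dclosed_def by (meson Union_upper finite_subset)

lemma chains_face: "c \<in> chains L j \<Longrightarrow> c \<sigma> \<noteq> 0 \<Longrightarrow> \<sigma> \<in> L \<and> card \<sigma> = j"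
  by (auto simp: chains_def)

lemma boundary_add: "boundary L (\<lambda>\<sigma>. c1 \<sigma> + c2 \<sigma>) = (\<lambda>\<sigma>. boundary L c1 \<sigma> + boundary L c2 \<sigma>)"
  by (auto simp: boundary_alt fun_eq_iff distrib_left sum.distrib)

lemma boundary_diff: "boundary L (\<lambda>\<sigma>. c1 \<sigma> - c2 \<sigma>) = (\<lambda>\<sigma>. boundary L c1 \<sigma> - boundary L c2 \<sigma>)"
  by (auto simp: boundary_alt fun_eq_iff right_diff_distrib sum_subtractf)

lemma boundary_sub:
  assumes L: "dclosed L" and L': "dclosed L'" and sub: "L' \<subseteq> L" and c: "c \<in> chains L' j"
  shows "boundary L' c = boundary L c"
proof
  fix \<sigma>
  show "boundary L' c \<sigma> = boundary L c \<sigma>"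
  proof (cases "\<sigma> \<in> L'")
    case True
    have "(\<Sum>v \<in> \<Union>L' - \<sigma>. sg \<sigma> v * c (insert v \<sigma>)) = (\<Sum>v \<in> \<Union>L - \<sigma>. sg \<sigma> v * c (insert v \<sigma>))"
    proof (rule sum.mono_neutral_left)
      show "finite (\<Union> L - \<sigma>)" using L by (auto simp: dclosed_def)
      show "\<Union> L' - \<sigma> \<subseteq> \<Union> L - \<sigma>" using sub by auto
      show "\<forall>i\<in>\<Union> L - \<sigma> - (\<Union> L' - \<sigma>). sg \<sigma> i * c (insert i \<sigma>) = (0::'a)"
      proof
        fix i assume "i \<in> \<Union> L - \<sigma> - (\<Union> L' - \<sigma>)"
        then have "insert i \<sigma> \<notin> L'" by auto
        then show "sg \<sigma> i * c (insert i \<sigma>) = 0" using c by (auto simp: chains_def)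
      qed
    qed
    then show ?thesis using True sub by (auto simp: boundary_alt)
  next
    case False
    have "c (insert v \<sigma>) = 0" for v
    proof (rule ccontr)
      assume "c (insert v \<sigma>) \<noteq> 0"
      then have "insert v \<sigma> \<in> L'" using c by (auto simp: chains_def)
      then have "\<sigma> \<in> L'" using L' by (auto simp: dclosed_def)
      then show False using False by simp
    qed
    then show ?thesis using False by (simp add: boundary_alt)
  qed
qed

lemma chains_sub: "c \<in> chains L' j \<Longrightarrow> L' \<subseteq> L \<Longrightarrow> c \<in> chains L j"
  by (auto simp: chains_def)

lemma boundary_chains:
  assumes L: "dclosed L" and c: "c \<in> chains L (Suc j)"
  shows "boundary L c \<in> chains L j"
  unfolding chains_def mem_Collect_eq
proof (intro allI impI)
  fix \<sigma> assume ne: "boundary L c \<sigma> \<noteq> 0"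
  then have s: "\<sigma> \<in> L" by (auto simp: boundary_alt split: if_splits)
  from ne s have "(\<Sum>v \<in> \<Union>L - \<sigma>. sg \<sigma> v * c (insert v \<sigma>)) \<noteq> 0" by (simp add: boundary_alt)
  then obtain v where v: "v \<in> \<Union>L - \<sigma>" "c (insert v \<sigma>) \<noteq> 0"
    by (metis (no_types, lifting) mult_zero_right sum.neutral)
  then have "card (insert v \<sigma>) = Suc j" using c by (auto simp: chains_def)
  moreover have "finite \<sigma>" using chains_finite_face[OF L s] .
  ultimately show "\<sigma> \<in> L \<and> card \<sigma> = j" using v s by auto
qed

lemma pair_sum_zero:
  fixes g :: "nat \<Rightarrow> nat \<Rightarrow> 'k::comm_ring_1"
  assumes fin: "finite D" and sym: "\<And>u w. g u w = g w u"
  shows "(\<Sum>u\<in>D. \<Sum>w\<in>D - {u}. (if u < w then - g u w else g u w)) = 0"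
proof -
  let ?f = "\<lambda>u w. (if u < w then - g u w else g u w)"
  define P where "P = Sigma D (\<lambda>u. D - {u})"
  define P1 where "P1 = {p\<in>P. fst p < snd p}"
  define P2 where "P2 = {p\<in>P. snd p < fst p}"
  have finP: "finite P" using fin by (auto simp: P_def)
  have "(\<Sum>u\<in>D. \<Sum>w\<in>D - {u}. ?f u w) = (\<Sum>p\<in>P. ?f (fst p) (snd p))"
    unfolding P_def by (subst sum.Sigma) (use fin in \<open>auto simp: split_def\<close>)
  also have "P = P1 \<union> P2" by (auto simp: P_def P1_def P2_def)
  also have "(\<Sum>p\<in>P1 \<union> P2. ?f (fst p) (snd p)) = (\<Sum>p\<in>P1. ?f (fst p) (snd p)) + (\<Sum>p\<in>P2. ?f (fst p) (snd p))"
    by (rule sum.union_disjoint) (use finP in \<open>auto simp: P1_def P2_def\<close>)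
  also have "(\<Sum>p\<in>P1. ?f (fst p) (snd p)) = (\<Sum>p\<in>P1. - g (fst p) (snd p))"
    by (rule sum.cong) (auto simp: P1_def)
  also have "(\<Sum>p\<in>P2. ?f (fst p) (snd p)) = (\<Sum>p\<in>P2. g (fst p) (snd p))"
    by (rule sum.cong) (auto simp: P2_def)
  also have "P2 = prod.swap ` P1" by (auto simp: P1_def P2_def P_def image_iff)
  also have "(\<Sum>p\<in>prod.swap ` P1. g (fst p) (snd p)) = (\<Sum>p\<in>P1. g (snd p) (fst p))"
    by (subst sum.reindex) (auto simp: inj_on_def)
  also have "\<dots> = (\<Sum>p\<in>P1. g (fst p) (snd p))" using sym by simp
  finally show ?thesis by (simp add: sum_negf)
qed

lemma boundary_boundary:
  assumes L: "dclosed L" and c: "\<forall>\<sigma>. c \<sigma> \<noteq> 0 \<longrightarrow> \<sigma> \<in> L"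
  shows "boundary L (boundary L c) = (\<lambda>_. (0::'k::field))"
proof
  fix \<sigma>
  show "boundary L (boundary L c) \<sigma> = 0"
  proof (cases "\<sigma> \<in> L")
    case False then show ?thesis by (simp add: boundary_alt)
  next
    case True
    have fs: "finite \<sigma>" using chains_finite_face[OF L True] .
    define D where "D = \<Union>L - \<sigma>"
    have fD: "finite D" using L by (auto simp: dclosed_def D_def)
    define g where "g u w = sg \<sigma> u * sg \<sigma> w * c (insert w (insert u \<sigma>))" for u w
    have gs: "g u w = g w u" for u w by (simp add: g_def insert_commute mult.commute)
    have inner: "sg \<sigma> u * boundary L c (insert u \<sigma>) = (\<Sum>w\<in>D - {u}. (if u < w then - g u w else g u w))"
      if u: "u \<in> D" for u
    proof -
      have "boundary L c (insert u \<sigma>) = (\<Sum>w\<in>D - {u}. sg (insert u \<sigma>) w * c (insert w (insert u \<sigma>)))"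
      proof (cases "insert u \<sigma> \<in> L")
        case True
        have "\<Union>L - insert u \<sigma> = D - {u}" by (auto simp: D_def)
        then show ?thesis using True by (simp add: boundary_alt)
      next
        case False
        have "c (insert w (insert u \<sigma>)) = 0" for w
        proof (rule ccontr)
          assume "c (insert w (insert u \<sigma>)) \<noteq> 0"
          then have "insert w (insert u \<sigma>) \<in> L" using c by auto
          then have "insert u \<sigma> \<in> L" using L unfolding dclosed_def by (meson subset_insertI)
          then show False using False by simp
        qed
        then show ?thesis using False by (simp add: boundary_alt)
      qed
      also have "sg \<sigma> u * \<dots> = (\<Sum>w\<in>D - {u}. sg \<sigma> u * (sg (insert u \<sigma>) w * c (insert w (insert u \<sigma>))))"
        by (simp add: sum_distrib_left)
      also have "\<dots> = (\<Sum>w\<in>D - {u}. (if u < w then - g u w else g u w))"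
      proof (rule sum.cong)
        fix w assume w: "w \<in> D - {u}"
        have "u \<notin> \<sigma>" using u by (auto simp: D_def)
        then have "sg (insert u \<sigma>) w = (if u < w then - sg \<sigma> w else (sg \<sigma> w :: 'k))"
          using sg_insert[OF fs, of u w] w by auto
        then show "sg \<sigma> u * (sg (insert u \<sigma>) w * c (insert w (insert u \<sigma>))) = (if u < w then - g u w else g u w)"
          by (simp add: g_def)
      qed simp
      finally show ?thesis .
    qed
    have "boundary L (boundary L c) \<sigma> = (\<Sum>u\<in>D. sg \<sigma> u * boundary L c (insert u \<sigma>))"
      using True by (simp add: boundary_alt D_def)
    also have "\<dots> = (\<Sum>u\<in>D. \<Sum>w\<in>D - {u}. (if u < w then - g u w else g u w))"
      by (rule sum.cong) (simp_all add: inner)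
    also have "\<dots> = 0" by (rule pair_sum_zero[OF fD gs])
    finally show ?thesis .
  qed
qed

lemma sum_single_nz:
  assumes "finite A" "a \<in> A" "\<And>x. x \<in> A \<Longrightarrow> x \<noteq> a \<Longrightarrow> f x = 0"
  shows "sum f A = f a"
  using assms by (simp add: sum.remove[of A a] sum.neutral)

lemma cone_hv:
  assumes L: "dclosed L" and apex: "\<forall>S\<in>L. insert a S \<in> L"
  shows "hv TYPE('k::field) L j"
  unfolding hv_def
proof (intro allI impI)
  fix z :: "nat set \<Rightarrow> 'k" assume "z \<in> chains L j \<and> boundary L z = (\<lambda>_. 0)"
  then have z: "z \<in> chains L j" and cyc: "boundary L z = (\<lambda>_. 0)" by auto
  define b where "b \<tau> = (if a \<in> \<tau> then sg (\<tau> - {a}) a * z (\<tau> - {a}) else 0)" for \<tau>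
  have e: "{} \<in> L" using L by (simp add: dclosed_def)
  have aU: "a \<in> \<Union>L" using apex e by force
  have fU: "finite (\<Union>L)" using L by (simp add: dclosed_def)
  have bch: "b \<in> chains L (Suc j)"
    unfolding chains_def mem_Collect_eq
  proof (intro allI impI)
    fix \<tau> assume "b \<tau> \<noteq> 0"
    then have a: "a \<in> \<tau>" and nz: "z (\<tau> - {a}) \<noteq> 0" by (auto simp: b_def split: if_splits)
    then have "\<tau> - {a} \<in> L" "card (\<tau> - {a}) = j" using z by (auto simp: chains_def)
    moreover have "finite (\<tau> - {a})" using chains_finite_face[OF L] calculation(1) .
    moreover have "\<tau> = insert a (\<tau> - {a})" using a by auto
    ultimately show "\<tau> \<in> L \<and> card \<tau> = Suc j" using apex
      by (metis card_insert_disjoint Diff_iff singletonI)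
  qed
  have "boundary L b = z"
  proof
    fix \<sigma>
    show "boundary L b \<sigma> = z \<sigma>"
    proof (cases "\<sigma> \<in> L")
      case False
      then have "z \<sigma> = 0" using z by (auto simp: chains_def)
      then show ?thesis using False by (simp add: boundary_alt)
    next
      case sL: True
      have fs: "finite \<sigma>" using chains_finite_face[OF L sL] .
      show ?thesis
      proof (cases "a \<in> \<sigma>")
        case False
        have "(\<Sum>v \<in> \<Union>L - \<sigma>. sg \<sigma> v * b (insert v \<sigma>)) = sg \<sigma> a * b (insert a \<sigma>)"
          by (rule sum_single_nz) (use fU aU False in \<open>auto simp: b_def\<close>)
        also have "\<dots> = z \<sigma>" using False by (simp add: b_def mult.assoc[symmetric] sg_sq)
        finally show ?thesis using sL by (simp add: boundary_alt)
      next
        case True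
        define \<rho> where "\<rho> = \<sigma> - {a}"
        have \<sigma>: "\<sigma> = insert a \<rho>" and an: "a \<notin> \<rho>" using True by (auto simp: \<rho>_def)
        have f\<rho>: "finite \<rho>" using fs by (simp add: \<rho>_def)
        have \<rho>L: "\<rho> \<in> L" using sL L by (auto simp: dclosed_def \<rho>_def)
        have "boundary L z \<rho> = 0" using cyc by simp
        then have "(\<Sum>v \<in> \<Union>L - \<rho>. sg \<rho> v * z (insert v \<rho>)) = 0" using \<rho>L by (simp add: boundary_alt)
        moreover have "\<Union>L - \<rho> = insert a (\<Union>L - \<sigma>)" using aU \<sigma> an by auto
        moreover have "(\<Sum>v \<in> insert a (\<Union>L - \<sigma>). sg \<rho> v * z (insert v \<rho>)) = sg \<rho> a * z (insert a \<rho>) + (\<Sum>v \<in> \<Union>L - \<sigma>. sg \<rho> v * z (insert v \<rho>))"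
          by (rule sum.insert) (use fU True in auto)
        ultimately have "sg \<rho> a * z \<sigma> + (\<Sum>v \<in> \<Union>L - \<sigma>. sg \<rho> v * z (insert v \<rho>)) = 0"
          by (simp only: \<sigma>[symmetric])
        then have S: "(\<Sum>v \<in> \<Union>L - \<sigma>. sg \<rho> v * z (insert v \<rho>)) = - (sg \<rho> a * z \<sigma>)"
          by (simp add: eq_neg_iff_add_eq_0 add.commute)
        have "(\<Sum>v \<in> \<Union>L - \<sigma>. sg \<sigma> v * b (insert v \<sigma>)) = (\<Sum>v \<in> \<Union>L - \<sigma>. - sg \<rho> a * (sg \<rho> v * z (insert v \<rho>)))"
        proof (rule sum.cong)
          fix v assume v: "v \<in> \<Union>L - \<sigma>"
          then have va: "v \<noteq> a" "v \<notin> \<rho>" using \<sigma> by auto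
          have "insert v \<sigma> - {a} = insert v \<rho>" using va an \<sigma> by auto
          then have bv: "b (insert v \<sigma>) = sg (insert v \<rho>) a * z (insert v \<rho>)" using True by (simp add: b_def)
          have s1: "sg \<sigma> v = (if a < v then - sg \<rho> v else (sg \<rho> v :: 'k))"
            unfolding \<sigma> by (rule sg_insert[OF f\<rho> an]) (use va in auto)
          have s2: "sg (insert v \<rho>) a = (if v < a then - sg \<rho> a else (sg \<rho> a :: 'k))"
            by (rule sg_insert[OF f\<rho> va(2)]) (use va in auto)
          show "sg \<sigma> v * b (insert v \<sigma>) = - sg \<rho> a * (sg \<rho> v * z (insert v \<rho>))"
            using va(1) unfolding bv s1 s2 by (cases "a < v"; cases "v < a") (simp_all add: algebra_simps)
        qed simp
        also have "\<dots> = - sg \<rho> a * (\<Sum>v \<in> \<Union>L - \<sigma>. sg \<rho> v * z (insert v \<rho>))"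
          by (simp add: sum_distrib_left)
        also have "\<dots> = z \<sigma>" by (simp add: S mult.assoc[symmetric] sg_sq)
        finally show ?thesis using sL by (simp add: boundary_alt)
      qed
    qed
  qed
  then show "\<exists>b\<in>chains L (Suc j). boundary L b = z" using bch by blast
qed

lemma dclosed_Un: "dclosed L1 \<Longrightarrow> dclosed L2 \<Longrightarrow> dclosed (L1 \<union> L2)"
  by (auto simp: dclosed_def)

lemma dclosed_Int: "dclosed L1 \<Longrightarrow> dclosed L2 \<Longrightarrow> dclosed (L1 \<inter> L2)"
  unfolding dclosed_def by (auto intro: finite_subset[of "\<Union>(L1 \<inter> L2)" "\<Union>L1"])

lemma mv_hv:
  assumes L1: "dclosed L1" and L2: "dclosed L2"
    and h1: "hv TYPE('k::field) L1 j" and h2: "hv TYPE('k) L2 j"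
    and h12: "0 < j \<Longrightarrow> hv TYPE('k) (L1 \<inter> L2) (j - 1)"
  shows "hv TYPE('k) (L1 \<union> L2) j"
  unfolding hv_def
proof (intro allI impI)
  let ?L = "L1 \<union> L2"
  have L: "dclosed ?L" using L1 L2 by (rule dclosed_Un)
  have L12: "dclosed (L1 \<inter> L2)" using L1 L2 by (rule dclosed_Int)
  fix z :: "nat set \<Rightarrow> 'k" assume "z \<in> chains ?L j \<and> boundary ?L z = (\<lambda>_. 0)"
  then have z: "z \<in> chains ?L j" and cyc: "boundary ?L z = (\<lambda>_. 0)" by auto
  define z2 where "z2 \<sigma> = (if \<sigma> \<in> L2 then z \<sigma> else 0)" for \<sigma>
  define z1 where "z1 \<sigma> = (if \<sigma> \<in> L2 then 0 else z \<sigma>)" for \<sigma>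
  have zs: "z = (\<lambda>\<sigma>. z1 \<sigma> + z2 \<sigma>)" by (auto simp: z1_def z2_def fun_eq_iff)
  have z1c: "z1 \<in> chains L1 j" using z by (auto simp: chains_def z1_def)
  have z2c: "z2 \<in> chains L2 j" using z by (auto simp: chains_def z2_def)
  show "\<exists>b\<in>chains ?L (Suc j). boundary ?L b = z"
  proof (cases j)
    case 0
    have "z1 = (\<lambda>_. 0)"
    proof
      fix \<sigma> show "z1 \<sigma> = 0"
      proof (rule ccontr)
        assume "z1 \<sigma> \<noteq> 0"
        then have "\<sigma> \<in> L1" "card \<sigma> = 0" "\<sigma> \<notin> L2" using z1c 0 by (auto simp: chains_def z1_def)
        moreover have "finite \<sigma>" using chains_finite_face[OF L1 calculation(1)] .
        ultimately show False using L2 by (auto simp: dclosed_def)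
      qed
    qed
    then have zz: "z = z2" using zs by simp
    have "boundary L2 z2 = boundary ?L z2" by (rule boundary_sub[OF L L2 _ z2c]) auto
    then have "boundary L2 z2 = (\<lambda>_. 0)" using cyc zz by simp
    then obtain b where b: "b \<in> chains L2 (Suc j)" "boundary L2 b = z2" using h2 z2c unfolding hv_def by blast
    have "boundary L2 b = boundary ?L b" by (rule boundary_sub[OF L L2 _ b(1)]) auto
    then show ?thesis using b zz chains_sub[OF b(1), of ?L] by auto
  next
    case (Suc j')
    define d where "d = boundary ?L z2"
    have bz1: "boundary ?L z1 = boundary L1 z1" by (rule boundary_sub[OF L L1 _ z1c, symmetric]) auto
    have bz2: "boundary ?L z2 = boundary L2 z2" by (rule boundary_sub[OF L L2 _ z2c, symmetric]) auto
    have sum0: "boundary ?L z1 \<sigma> + d \<sigma> = 0" for \<sigma>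
      using cyc unfolding zs boundary_add d_def by (metis)
    have dc: "d \<in> chains (L1 \<inter> L2) j'"
    proof -
      have "d \<in> chains L2 j'" unfolding d_def bz2 using boundary_chains[OF L2, of z2 j'] z2c Suc by simp
      moreover have "boundary L1 z1 \<in> chains L1 j'" using boundary_chains[OF L1, of z1 j'] z1c Suc by simp
      ultimately show ?thesis using sum0 bz1 unfolding chains_def
        by (auto simp: add_eq_0_iff2)
    qed
    have dcyc: "boundary (L1 \<inter> L2) d = (\<lambda>_. 0)"
    proof -
      have "boundary (L1 \<inter> L2) d = boundary ?L d" by (rule boundary_sub[OF L L12 _ dc]) auto
      also have "\<dots> = (\<lambda>_. 0)" unfolding d_def
        by (rule boundary_boundary[OF L]) (use z2c in \<open>auto simp: chains_def\<close>)
      finally show ?thesis .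
    qed
    obtain w where w: "w \<in> chains (L1 \<inter> L2) j" "boundary (L1 \<inter> L2) w = d"
      using h12 dc dcyc Suc unfolding hv_def by auto
    have bw: "boundary ?L w = d" using w boundary_sub[OF L L12 _ w(1)] by (metis Int_lower1 le_supI1)
    have bw2: "boundary L2 w = d" using w boundary_sub[OF L2 L12 _ w(1)] by (metis Int_lower2)
    have bw1: "boundary L1 w = d" using w boundary_sub[OF L1 L12 _ w(1)] by (metis Int_lower1)
    have c2: "(\<lambda>\<sigma>. z2 \<sigma> - w \<sigma>) \<in> chains L2 j" unfolding chains_def mem_Collect_eq
    proof (intro allI impI)
      fix \<sigma> assume "z2 \<sigma> - w \<sigma> \<noteq> 0"
      then have "z2 \<sigma> \<noteq> 0 \<or> w \<sigma> \<noteq> 0" by auto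
      then show "\<sigma> \<in> L2 \<and> card \<sigma> = j" using z2c w(1) by (auto simp: chains_def)
    qed
    have c1: "(\<lambda>\<sigma>. z1 \<sigma> + w \<sigma>) \<in> chains L1 j" unfolding chains_def mem_Collect_eq
    proof (intro allI impI)
      fix \<sigma> assume "z1 \<sigma> + w \<sigma> \<noteq> 0"
      then have "z1 \<sigma> \<noteq> 0 \<or> w \<sigma> \<noteq> 0" by auto
      then show "\<sigma> \<in> L1 \<and> card \<sigma> = j" using z1c w(1) by (auto simp: chains_def)
    qed
    have "boundary L2 (\<lambda>\<sigma>. z2 \<sigma> - w \<sigma>) = (\<lambda>_. 0)"
      unfolding boundary_diff bw2 bz2[symmetric] d_def by simp
    then obtain b2 where b2: "b2 \<in> chains L2 (Suc j)" "boundary L2 b2 = (\<lambda>\<sigma>. z2 \<sigma> - w \<sigma>)"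
      using h2 c2 unfolding hv_def by blast
    have "boundary L1 (\<lambda>\<sigma>. z1 \<sigma> + w \<sigma>) = (\<lambda>_. 0)"
      unfolding boundary_add bw1 bz1[symmetric] using sum0 by simp
    then obtain b1 where b1: "b1 \<in> chains L1 (Suc j)" "boundary L1 b1 = (\<lambda>\<sigma>. z1 \<sigma> + w \<sigma>)"
      using h1 c1 unfolding hv_def by blast
    have "boundary ?L b1 = (\<lambda>\<sigma>. z1 \<sigma> + w \<sigma>)" using b1 boundary_sub[OF L L1 _ b1(1)] by (metis Un_upper1)
    moreover have "boundary ?L b2 = (\<lambda>\<sigma>. z2 \<sigma> - w \<sigma>)" using b2 boundary_sub[OF L L2 _ b2(1)] by (metis Un_upper2)
    ultimately have "boundary ?L (\<lambda>\<sigma>. b1 \<sigma> + b2 \<sigma>) = z"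
      unfolding boundary_add zs by (auto simp: fun_eq_iff)
    moreover have "(\<lambda>\<sigma>. b1 \<sigma> + b2 \<sigma>) \<in> chains ?L (Suc j)" unfolding chains_def mem_Collect_eq
    proof (intro allI impI)
      fix \<sigma> assume "b1 \<sigma> + b2 \<sigma> \<noteq> 0"
      then have "b1 \<sigma> \<noteq> 0 \<or> b2 \<sigma> \<noteq> 0" by auto
      then show "\<sigma> \<in> ?L \<and> card \<sigma> = Suc j" using b1(1) b2(1) by (auto simp: chains_def)
    qed
    ultimately show ?thesis by blast
  qed
qed

definition nerve :: "(nat \<Rightarrow> 'n set) \<Rightarrow> nat set \<Rightarrow> nat set set" where
  "nerve G I = {S. S \<subseteq> I \<and> (S = {} \<or> (\<exists>x. \<forall>i\<in>S. x \<in> G i))}"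

definition cplx :: "(nat \<Rightarrow> 'n set) \<Rightarrow> nat set \<Rightarrow> 'n set \<Rightarrow> 'n set set" where
  "cplx G I W = {T. T \<subseteq> W \<and> (T = {} \<or> (\<exists>i\<in>I. T \<subseteq> G i))}"

definition mnf :: "'n set set \<Rightarrow> 'n set \<Rightarrow> 'n set set" where
  "mnf K W = {T. T \<subseteq> W \<and> T \<notin> K \<and> (\<forall>u\<in>T. T - {u} \<in> K)}"

lemma dclosed_nerve: "finite I \<Longrightarrow> dclosed (nerve G I)"
proof -
  assume fI: "finite I"
  have "\<Union>(nerve G I) \<subseteq> I" unfolding nerve_def by blast
  then have "finite (\<Union>(nerve G I))" using fI by (rule finite_subset)
  moreover have "{} \<in> nerve G I" unfolding nerve_def by blast
  moreover have "\<forall>F\<in>nerve G I. \<forall>H. H \<subseteq> F \<longrightarrow> H \<in> nerve G I"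
    unfolding nerve_def by blast
  ultimately show ?thesis unfolding dclosed_def by blast
qed

lemma dclosed_Pow: "finite A \<Longrightarrow> dclosed (Pow A)"
  unfolding dclosed_def by auto

lemma exists_mnf:
  assumes cl: "\<forall>F\<in>K. \<forall>G. G \<subseteq> F \<longrightarrow> G \<in> K" and fT: "finite T" and T: "T \<notin> K"
  shows "\<exists>M. M \<subseteq> T \<and> M \<notin> K \<and> (\<forall>u\<in>M. M - {u} \<in> K)"
  using fT T
proof (induct "card T" arbitrary: T rule: less_induct)
  case less
  show ?case
  proof (cases "\<forall>u\<in>T. T - {u} \<in> K")
    case True then show ?thesis using less by blast
  next
    case False
    then obtain u where u: "u \<in> T" "T - {u} \<notin> K" by blast
    have "card (T - {u}) < card T" by (rule card_Diff1_less[OF less(2) u(1)])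
    then obtain M where "M \<subseteq> T - {u}" "M \<notin> K" "\<forall>u\<in>M. M - {u} \<in> K"
      using less(1)[of "T - {u}"] less(2) u by auto
    then show ?thesis by blast
  qed
qed

lemma cplx_closed: "\<forall>F\<in>cplx G I W. \<forall>H. H \<subseteq> F \<longrightarrow> H \<in> cplx G I W"
  unfolding cplx_def by blast

lemma finite_mnf: "finite W \<Longrightarrow> finite (mnf K W)"
  unfolding mnf_def by (rule finite_subset[of _ "Pow W"]) auto

lemma nerve_hv:
  assumes "finite W" "finite I" "\<forall>i\<in>I. G i \<subseteq> W" "j + 1 + card (mnf (cplx G I W) W) \<le> card W"
  shows "hv TYPE('k::field) (nerve G I) j"
  using assms
proof (induct "card W" arbitrary: W G I j rule: less_induct)
  case less
  note fW = less(2) and fI = less(3) and GW = less(4) and bd = less(5)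
  let ?K = "cplx G I W"
  let ?s = "card (mnf ?K W)"
  have Wne: "W \<noteq> {}" using bd fW by auto
  show ?case
  proof (cases "?s = 0")
    case True
    then have mE: "mnf ?K W = {}" using finite_mnf[OF fW] by simp
    have "W \<in> ?K"
    proof (rule ccontr)
      assume "W \<notin> ?K"
      from exists_mnf[OF cplx_closed fW this]
      obtain M where "M \<subseteq> W" "M \<notin> ?K" "\<forall>u\<in>M. M - {u} \<in> ?K" by blast
      then have "M \<in> mnf ?K W" unfolding mnf_def by blast
      then show False using mE by simp
    qed
    then obtain i where i: "i \<in> I" "W \<subseteq> G i" using Wne unfolding cplx_def by blast
    have apex: "\<forall>S\<in>nerve G I. insert i S \<in> nerve G I"
    proof
      fix S assume S: "S \<in> nerve G I"
      then have SI: "S \<subseteq> I" by (simp add: nerve_def)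
      show "insert i S \<in> nerve G I"
      proof (cases "S = {}")
        case True
        obtain w where "w \<in> W" using Wne by blast
        then have "w \<in> G i" using i by blast
        then show ?thesis using True i unfolding nerve_def by blast
      next
        case False
        then obtain x where x: "\<forall>i\<in>S. x \<in> G i" using S unfolding nerve_def by blast
        obtain i0 where i0: "i0 \<in> S" using False by blast
        have "x \<in> W" using x i0 SI GW by blast
        then have "x \<in> G i" using i by blast
        then have "\<forall>k\<in>insert i S. x \<in> G k" using x by blast
        then show ?thesis using SI i unfolding nerve_def by blast
      qed
    qed
    show ?thesis by (rule cone_hv[OF dclosed_nerve[OF fI] apex])
  next
    case False
    then obtain T0 where T0: "T0 \<in> mnf ?K W" by (metis card.empty equals0I)
    have "T0 \<noteq> {}" using T0 unfolding mnf_def cplx_def by blast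
    then obtain v where vT0: "v \<in> T0" by auto
    have vW: "v \<in> W" using T0 vT0 by (auto simp: mnf_def)
    define W' where "W' = W - {v}"
    define G' where "G' i = G i - {v}" for i
    define A where "A = {i\<in>I. v \<in> G i}"
    have fW': "finite W'" using fW by (simp add: W'_def)
    have cW': "card W' < card W" unfolding W'_def by (rule card_Diff1_less[OF fW vW])
    have cW'': "card W' = card W - 1" using fW vW by (simp add: W'_def)
    have G'W': "\<forall>i\<in>I. G' i \<subseteq> W'" using GW by (auto simp: G'_def W'_def)
    have del: "mnf (cplx G' I W') W' \<subseteq> mnf ?K W - {T0}"
    proof
      fix T assume T: "T \<in> mnf (cplx G' I W') W'"
      have eq: "T' \<subseteq> W' \<Longrightarrow> (T' \<in> cplx G' I W') = (T' \<in> ?K)" for T'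
        by (auto simp: cplx_def G'_def W'_def)
      have TW: "T \<subseteq> W'" using T by (simp add: mnf_def)
      have "T \<in> mnf ?K W"
        unfolding mnf_def
      proof (intro CollectI conjI ballI)
        show "T \<subseteq> W" using TW by (auto simp: W'_def)
        show "T \<notin> ?K" using eq[OF TW] T by (simp add: mnf_def)
        fix u assume "u \<in> T"
        then have "T - {u} \<in> cplx G' I W'" using T by (simp add: mnf_def)
        moreover have "T - {u} \<subseteq> W'" using TW by auto
        ultimately show "T - {u} \<in> ?K" using eq by simp
      qed
      moreover have "T \<noteq> T0" using TW vT0 by (auto simp: W'_def)
      ultimately show "T \<in> mnf ?K W - {T0}" by simp
    qed
    have sdel: "card (mnf (cplx G' I W') W') \<le> ?s - 1"
    proof -
      have "card (mnf (cplx G' I W') W') \<le> card (mnf ?K W - {T0})"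
        by (rule card_mono) (use finite_mnf[OF fW] del in auto)
      then show ?thesis using T0 finite_mnf[OF fW] by simp
    qed
    have hdel: "hv TYPE('k) (nerve G' I) j"
      by (rule less(1)[OF cW' fW' fI G'W']) (use bd sdel cW'' False in linarith)
    show ?thesis
    proof (cases "A = {}")
      case True
      have "nerve G I = nerve G' I"
      proof -
        have "\<forall>i\<in>I. G' i = G i" using True by (auto simp: A_def G'_def)
        then show ?thesis unfolding nerve_def by (metis (no_types, lifting) subsetD)
      qed
      then show ?thesis using hdel by simp
    next
      case Ane: False
      have fA: "finite A" using fI by (simp add: A_def)
      have AI: "A \<subseteq> I" by (auto simp: A_def)
      have split: "nerve G I = nerve G' I \<union> Pow A"
      proof
        show "nerve G I \<subseteq> nerve G' I \<union> Pow A"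
        proof
          fix S assume S: "S \<in> nerve G I"
          show "S \<in> nerve G' I \<union> Pow A"
          proof (cases "S = {}")
            case True then show ?thesis by (simp add: nerve_def)
          next
            case False
            then obtain x where x: "\<forall>i\<in>S. x \<in> G i" using S by (auto simp: nerve_def)
            show ?thesis
            proof (cases "x = v")
              case True then have "S \<subseteq> A" using x S by (auto simp: A_def nerve_def)
              then show ?thesis by simp
            next
              case False then have "\<forall>i\<in>S. x \<in> G' i" using x by (simp add: G'_def)
              then show ?thesis using S by (auto simp: nerve_def)
            qed
          qed
        qed
        show "nerve G' I \<union> Pow A \<subseteq> nerve G I"
        proof
          fix S assume "S \<in> nerve G' I \<union> Pow A"
          then show "S \<in> nerve G I"
          proof
            assume "S \<in> nerve G' I" then show ?thesis by (auto simp: nerve_def G'_def)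
          next
            assume "S \<in> Pow A" then have "\<forall>i\<in>S. v \<in> G i" "S \<subseteq> I" by (auto simp: A_def)
            then show ?thesis by (auto simp: nerve_def)
          qed
        qed
      qed
      have inter: "nerve G' I \<inter> Pow A = nerve G' A"
        using AI by (auto simp: nerve_def)
      have link_char: "T \<in> cplx G' A W' \<longleftrightarrow> T \<subseteq> W' \<and> insert v T \<in> ?K" for T
      proof
        assume T: "T \<in> cplx G' A W'"
        show "T \<subseteq> W' \<and> insert v T \<in> ?K"
        proof (cases "T = {}")
          case True
          obtain i where "i \<in> A" using Ane by auto
          then show ?thesis using True vW by (auto simp: cplx_def A_def)
        next
          case False
          then obtain i where "i \<in> A" "T \<subseteq> G' i" using T by (auto simp: cplx_def)
          then show ?thesis using T vW GW by (auto simp: cplx_def A_def G'_def W'_def)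
        qed
      next
        assume T: "T \<subseteq> W' \<and> insert v T \<in> ?K"
        then obtain i where "i \<in> I" "insert v T \<subseteq> G i" by (auto simp: cplx_def)
        then show "T \<in> cplx G' A W'" using T by (auto simp: cplx_def A_def G'_def W'_def)
      qed
      have slink: "card (mnf (cplx G' A W') W') \<le> ?s"
      proof -
        define f where "f T = (if insert v T \<in> mnf ?K W then insert v T else T)" for T
        have into: "f ` mnf (cplx G' A W') W' \<subseteq> mnf ?K W"
        proof
          fix X assume "X \<in> f ` mnf (cplx G' A W') W'"
          then obtain T where T: "T \<in> mnf (cplx G' A W') W'" and X: "X = f T" by auto
          have TW: "T \<subseteq> W'" and nl: "insert v T \<notin> ?K"
            and sub: "\<forall>u\<in>T. insert v (T - {u}) \<in> ?K"
            using T link_char by (auto simp: mnf_def)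
          show "X \<in> mnf ?K W"
          proof (cases "insert v T \<in> mnf ?K W")
            case True then show ?thesis using X by (simp add: f_def)
          next
            case False
            have vT: "v \<notin> T" using TW by (auto simp: W'_def)
            have TK: "T \<notin> ?K"
            proof
              assume TK: "T \<in> ?K"
              have "insert v T \<in> mnf ?K W"
                unfolding mnf_def
              proof (intro CollectI conjI ballI)
                show "insert v T \<subseteq> W" using TW vW by (auto simp: W'_def)
                show "insert v T \<notin> ?K" by (rule nl)
                fix u assume "u \<in> insert v T"
                then show "insert v T - {u} \<in> ?K"
                proof
                  assume "u = v" then show ?thesis using TK vT by simp
                next
                  assume u: "u \<in> T"
                  have "insert v T - {u} = insert v (T - {u})" using u vT by auto
                  then show ?thesis using sub u by simp
                qed
              qed
              then show False using False by simp
            qed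
            have "T \<in> mnf ?K W"
              unfolding mnf_def
            proof (intro CollectI conjI ballI)
              show "T \<subseteq> W" using TW by (auto simp: W'_def)
              show "T \<notin> ?K" by (rule TK)
              fix u assume "u \<in> T"
              then have "insert v (T - {u}) \<in> ?K" using sub by simp
              then show "T - {u} \<in> ?K" using cplx_closed by (meson subset_insertI)
            qed
            then show ?thesis using X False by (simp add: f_def)
          qed
        qed
        have inj: "inj_on f (mnf (cplx G' A W') W')"
        proof (rule inj_onI)
          fix T1 T2 assume T1: "T1 \<in> mnf (cplx G' A W') W'" and T2: "T2 \<in> mnf (cplx G' A W') W'"
            and e: "f T1 = f T2"
          have v1: "v \<notin> T1" and v2: "v \<notin> T2" using T1 T2 by (auto simp: mnf_def W'_def)
          show "T1 = T2"
          proof (cases "insert v T1 \<in> mnf ?K W"; cases "insert v T2 \<in> mnf ?K W")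
            assume "insert v T1 \<in> mnf ?K W" "insert v T2 \<in> mnf ?K W"
            then have "insert v T1 = insert v T2" using e by (simp add: f_def)
            then show ?thesis using v1 v2 by (metis insert_ident)
          next
            assume "insert v T1 \<in> mnf ?K W" "insert v T2 \<notin> mnf ?K W"
            then have "insert v T1 = T2" using e by (simp add: f_def)
            then show ?thesis using v2 by blast
          next
            assume "insert v T1 \<notin> mnf ?K W" "insert v T2 \<in> mnf ?K W"
            then have "T1 = insert v T2" using e by (simp add: f_def)
            then show ?thesis using v1 by blast
          next
            assume "insert v T1 \<notin> mnf ?K W" "insert v T2 \<notin> mnf ?K W"
            then show ?thesis using e by (simp add: f_def)
          qed
        qed
        have "card (mnf (cplx G' A W') W') = card (f ` mnf (cplx G' A W') W')"
          using inj by (simp add: card_image)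
        also have "\<dots> \<le> ?s" by (rule card_mono[OF finite_mnf[OF fW] into])
        finally show ?thesis .
      qed
      have G'W'A: "\<forall>i\<in>A. G' i \<subseteq> W'" using G'W' AI by auto
      obtain a where aA: "a \<in> A" using Ane by auto
      have hpow: "hv TYPE('k) (Pow A) j"
        by (rule cone_hv[OF dclosed_Pow[OF fA]]) (use aA in auto)
      have hlink: "hv TYPE('k) (nerve G' A) (j - 1)" if "0 < j"
        by (rule less(1)[OF cW' fW' finite_subset[OF AI fI] G'W'A]) (use bd slink cW'' that in linarith)
      have "hv TYPE('k) (nerve G' I \<union> Pow A) j"
        by (rule mv_hv[OF dclosed_nerve[OF fI] dclosed_Pow[OF fA] hdel hpow])
           (use hlink inter in simp)
      then show ?thesis using split by simp
    qed
  qed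
qed



lemma lookup_mult_keys:
  fixes f g :: "('a::comm_monoid_add \<Rightarrow>\<^sub>0 'b::comm_semiring_1)"
  shows "Poly_Mapping.lookup (f * g) k =
    (\<Sum>x\<in>Poly_Mapping.keys f. \<Sum>y\<in>Poly_Mapping.keys g.
        (if k = x + y then Poly_Mapping.lookup f x * Poly_Mapping.lookup g y else 0))"
proof -
  have inner: "(\<Sum>q. Poly_Mapping.lookup g q when k = l + q) =
      (\<Sum>y\<in>Poly_Mapping.keys g. (if k = l + y then Poly_Mapping.lookup g y else 0))" for l
    by (subst Sum_any.expand_superset[of "Poly_Mapping.keys g"]) (auto simp: when_def in_keys_iff intro!: sum.cong)
  have "Poly_Mapping.lookup (f * g) k = (\<Sum>l. Poly_Mapping.lookup f l * (\<Sum>y\<in>Poly_Mapping.keys g. (if k = l + y then Poly_Mapping.lookup g y else 0)))"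
    by (simp add: lookup_mult inner)
  also have "\<dots> = (\<Sum>l\<in>Poly_Mapping.keys f. Poly_Mapping.lookup f l * (\<Sum>y\<in>Poly_Mapping.keys g. (if k = l + y then Poly_Mapping.lookup g y else 0)))"
    by (subst Sum_any.expand_superset[of "Poly_Mapping.keys f"]) (auto simp: in_keys_iff)
  also have "\<dots> = (\<Sum>x\<in>Poly_Mapping.keys f. \<Sum>y\<in>Poly_Mapping.keys g.
        (if k = x + y then Poly_Mapping.lookup f x * Poly_Mapping.lookup g y else 0))"
    by (simp add: sum_distrib_left if_distrib cong: if_cong)
  finally show ?thesis .
qed

lemma keys_add_nat: "Poly_Mapping.keys (a + b :: 'n \<Rightarrow>\<^sub>0 nat) = Poly_Mapping.keys a \<union> Poly_Mapping.keys b"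
  by (auto simp: in_keys_iff lookup_add)

lemma poly_sum_monomials:
  "f = (\<Sum>\<alpha>\<in>Poly_Mapping.keys f. Poly_Mapping.single \<alpha> (Poly_Mapping.lookup f \<alpha>))"
  by (rule poly_mapping_eqI) (auto simp: lookup_sum lookup_single when_def in_keys_iff sum.delta' )

lemma ideal_gen_ideal: "is_ideal (ideal_gen S)"
  unfolding ideal_gen_def is_ideal_def by blast

lemma ideal_gen_base: "S \<subseteq> ideal_gen S"
  unfolding ideal_gen_def by blast

lemma ideal_gen_min: "is_ideal J \<Longrightarrow> S \<subseteq> J \<Longrightarrow> ideal_gen S \<subseteq> J"
  unfolding ideal_gen_def by blast

lemma ideal_gen_mono: "S \<subseteq> T \<Longrightarrow> ideal_gen S \<subseteq> ideal_gen T"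
  unfolding ideal_gen_def by blast

lemma ideal_sum: "is_ideal J \<Longrightarrow> (\<forall>a\<in>A. f a \<in> J) \<Longrightarrow> sum f A \<in> J"
proof (induct A rule: infinite_finite_induct)
  case (infinite A) then show ?case by (simp add: is_ideal_def)
next
  case empty then show ?case by (simp add: is_ideal_def)
next
  case (insert x F) then show ?case by (simp add: is_ideal_def)
qed

lemma ideal_mult_left: "is_ideal J \<Longrightarrow> a \<in> J \<Longrightarrow> r * a \<in> J"
  by (simp add: is_ideal_def)

lemma ideal_mult_right: "is_ideal J \<Longrightarrow> a \<in> J \<Longrightarrow> a * r \<in> J"
  by (metis ideal_mult_left mult.commute)

lemma ideal_neg: "is_ideal J \<Longrightarrow> a \<in> J \<Longrightarrow> - a \<in> J"
  using ideal_mult_left[of J a "-1"] by simp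

lemma ideal_add: "is_ideal J \<Longrightarrow> a \<in> J \<Longrightarrow> b \<in> J \<Longrightarrow> a + b \<in> J"
  by (simp add: is_ideal_def)

lemma ideal_diff: "is_ideal J \<Longrightarrow> a \<in> J \<Longrightarrow> b \<in> J \<Longrightarrow> a - b \<in> J"
  using ideal_add[of J a "-b"] ideal_neg[of J b] by simp


definition ind :: "'n set \<Rightarrow> ('n \<Rightarrow>\<^sub>0 nat)" where
  "ind F = (\<Sum>v\<in>F. Poly_Mapping.single v 1)"

lemma lookup_ind: "finite F \<Longrightarrow> Poly_Mapping.lookup (ind F) w = (if w \<in> F then 1 else 0)"
  by (simp add: ind_def lookup_sum lookup_single when_def)

lemma keys_ind: "finite F \<Longrightarrow> Poly_Mapping.keys (ind F) = F"
  by (auto simp: in_keys_iff lookup_ind split: if_splits)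

lemma prod_pvar: "finite F \<Longrightarrow> (\<Prod>v\<in>F. pvar v) = (Poly_Mapping.single (ind F) 1 :: ('n, 'k::comm_ring_1) mpoly)"
proof (induct F rule: finite_induct)
  case empty then show ?case by (simp add: ind_def)
next
  case (insert x F)
  then show ?case by (simp add: pvar_def ind_def mult_single add.commute)
qed


definition PF :: "'n set \<Rightarrow> ('n, 'k::comm_ring_1) mpoly set" where
  "PF F = {f. \<forall>\<alpha>\<in>Poly_Mapping.keys f. \<not> Poly_Mapping.keys \<alpha> \<subseteq> F}"

definition monoI :: "'n set set \<Rightarrow> ('n, 'k::comm_ring_1) mpoly set" where
  "monoI K = {f. \<forall>\<alpha>\<in>Poly_Mapping.keys f. Poly_Mapping.keys \<alpha> \<notin> K}"

lemma keys_mult_sub: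
  assumes "\<alpha> \<in> Poly_Mapping.keys (r * f :: ('n, 'k::comm_ring_1) mpoly)"
  obtains \<beta> where "\<beta> \<in> Poly_Mapping.keys f" "Poly_Mapping.keys \<beta> \<subseteq> Poly_Mapping.keys \<alpha>"
proof -
  have "\<alpha> \<in> {a + b |a b. a \<in> Poly_Mapping.keys r \<and> b \<in> Poly_Mapping.keys f}"
    using keys_mult[of r f] assms by (rule subsetD)
  then obtain a b where ab: "\<alpha> = a + b" "b \<in> Poly_Mapping.keys f" by blast
  show ?thesis
  proof (rule that[of b])
    show "b \<in> Poly_Mapping.keys f" by (rule ab(2))
    show "Poly_Mapping.keys b \<subseteq> Poly_Mapping.keys \<alpha>" unfolding ab(1) keys_add_nat by (rule Un_upper2)
  qed
qed

lemma keys_add_sub: "\<alpha> \<in> Poly_Mapping.keys (f + g) \<Longrightarrow> \<alpha> \<in> Poly_Mapping.keys f \<or> \<alpha> \<in> Poly_Mapping.keys g"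
  using keys_add[of f g] by (rule subsetD[THEN UnE]) blast+

lemma keyset_ideal:
  assumes up: "\<And>A B. A \<subseteq> B \<Longrightarrow> Q A \<Longrightarrow> Q B"
  shows "is_ideal {f :: ('n, 'k::comm_ring_1) mpoly. \<forall>\<alpha>\<in>Poly_Mapping.keys f. Q (Poly_Mapping.keys \<alpha>)}"
  unfolding is_ideal_def
proof (intro conjI ballI allI)
  let ?J = "{f :: ('n, 'k) mpoly. \<forall>\<alpha>\<in>Poly_Mapping.keys f. Q (Poly_Mapping.keys \<alpha>)}"
  show "0 \<in> ?J" by simp
  fix a b assume a: "a \<in> ?J" and b: "b \<in> ?J"
  show "a + b \<in> ?J"
  proof (rule CollectI, rule ballI)
    fix \<alpha> assume "\<alpha> \<in> Poly_Mapping.keys (a + b)"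
    then have "\<alpha> \<in> Poly_Mapping.keys a \<or> \<alpha> \<in> Poly_Mapping.keys b" by (rule keys_add_sub)
    then show "Q (Poly_Mapping.keys \<alpha>)" using a b by blast
  qed
next
  let ?J = "{f :: ('n, 'k) mpoly. \<forall>\<alpha>\<in>Poly_Mapping.keys f. Q (Poly_Mapping.keys \<alpha>)}"
  fix r a assume a: "a \<in> ?J"
  show "r * a \<in> ?J"
  proof (rule CollectI, rule ballI)
    fix \<alpha> assume "\<alpha> \<in> Poly_Mapping.keys (r * a)"
    then obtain \<beta> where "\<beta> \<in> Poly_Mapping.keys a" "Poly_Mapping.keys \<beta> \<subseteq> Poly_Mapping.keys \<alpha>"
      by (rule keys_mult_sub)
    then show "Q (Poly_Mapping.keys \<alpha>)" using a up by blast
  qed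
qed

lemma PF_ideal: "is_ideal (PF F :: ('n, 'k::comm_ring_1) mpoly set)"
  unfolding PF_def by (rule keyset_ideal) blast

lemma monoI_ideal:
  assumes cl: "\<forall>F\<in>K. \<forall>G. G \<subseteq> F \<longrightarrow> G \<in> K"
  shows "is_ideal (monoI K :: ('n, 'k::comm_ring_1) mpoly set)"
  unfolding monoI_def by (rule keyset_ideal) (use cl in blast)

lemma sum_single_nz':
  assumes "finite A" "a \<in> A" "\<And>x. x \<in> A \<Longrightarrow> x \<noteq> a \<Longrightarrow> f x = 0"
  shows "sum f A = f a"
  using assms by (simp add: sum.remove[of A a] sum.neutral)

lemma exists_inj_nat: "\<exists>e :: 'n::finite \<Rightarrow> nat. inj e"
  using finite_imp_inj_to_nat_seg[of "UNIV :: 'n set"] by auto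

definition kappa :: "('n::finite \<Rightarrow> nat) \<Rightarrow> ('n \<Rightarrow>\<^sub>0 nat) \<Rightarrow> (nat \<Rightarrow>\<^sub>0 nat)" where
  "kappa e \<alpha> = (\<Sum>v\<in>UNIV. Poly_Mapping.single (e v) (Poly_Mapping.lookup \<alpha> v))"

lemma lookup_kappa: "inj e \<Longrightarrow> Poly_Mapping.lookup (kappa e \<alpha>) (e v) = Poly_Mapping.lookup \<alpha> v"
  unfolding kappa_def lookup_sum lookup_single
  by (subst sum_single_nz'[of _ v]) (auto simp: when_def inj_eq)

lemma kappa_add: "kappa e (\<alpha> + \<beta>) = kappa e \<alpha> + kappa e \<beta>"
  unfolding kappa_def by (simp add: lookup_add single_add sum.distrib)

lemma kappa_inj: "inj e \<Longrightarrow> kappa e \<alpha> = kappa e \<beta> \<Longrightarrow> \<alpha> = \<beta>"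
  by (rule poly_mapping_eqI) (metis lookup_kappa)

lemma mpoly_no_zero_div:
  fixes f g :: "('n::finite, 'k::field) mpoly"
  assumes f: "f \<noteq> 0" and g: "g \<noteq> 0"
  shows "f * g \<noteq> 0"
proof -
  obtain e :: "'n \<Rightarrow> nat" where e: "inj e" using exists_inj_nat by blast
  let ?F = "Poly_Mapping.keys f" and ?G = "Poly_Mapping.keys g"
  have fF: "finite ?F" "?F \<noteq> {}" using f by auto
  have fG: "finite ?G" "?G \<noteq> {}" using g by auto
  obtain a where a: "a \<in> ?F" "kappa e a = Max (kappa e ` ?F)"
  proof -
    have "Max (kappa e ` ?F) \<in> kappa e ` ?F" using fF by (intro Max_in) auto
    then show ?thesis using that by (metis (no_types, lifting) imageE)
  qed
  obtain b where b: "b \<in> ?G" "kappa e b = Max (kappa e ` ?G)"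
  proof -
    have "Max (kappa e ` ?G) \<in> kappa e ` ?G" using fG by (intro Max_in) auto
    then show ?thesis using that by (metis (no_types, lifting) imageE)
  qed
  have uniq: "x = a \<and> y = b" if x: "x \<in> ?F" and y: "y \<in> ?G" and xy: "a + b = x + y" for x y
  proof -
    have kx: "kappa e x \<le> kappa e a" using a fF x by simp
    have ky: "kappa e y \<le> kappa e b" using b fG y by simp
    have ks: "kappa e a + kappa e b = kappa e x + kappa e y" using xy by (metis kappa_add)
    have "kappa e x = kappa e a"
    proof (rule ccontr)
      assume "kappa e x \<noteq> kappa e a"
      then have "kappa e x < kappa e a" using kx by simp
      then have "kappa e x + kappa e y < kappa e a + kappa e b" using ky by (rule add_less_le_mono)
      then show False using ks by simp
    qed
    then have "x = a" using kappa_inj[OF e] by blast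
    then show ?thesis using xy by simp
  qed
  have "Poly_Mapping.lookup (f * g) (a + b) = (\<Sum>x\<in>?F. \<Sum>y\<in>?G.
        (if a + b = x + y then Poly_Mapping.lookup f x * Poly_Mapping.lookup g y else 0))"
    by (rule lookup_mult_keys)
  also have "\<dots> = (\<Sum>y\<in>?G. if a + b = a + y then Poly_Mapping.lookup f a * Poly_Mapping.lookup g y else 0)"
  proof (rule sum_single_nz')
    show "finite ?F" "a \<in> ?F" by (simp_all add: a)
    show "(\<Sum>y\<in>?G. if a + b = x + y then Poly_Mapping.lookup f x * Poly_Mapping.lookup g y else 0) = 0"
      if "x \<in> ?F" "x \<noteq> a" for x
      using uniq that by (intro sum.neutral) auto
  qed
  also have "\<dots> = Poly_Mapping.lookup f a * Poly_Mapping.lookup g b"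
    by (rule trans[OF sum_single_nz'[of _ b]]) (use b fG in auto)
  also have "\<dots> \<noteq> 0" using a(1) b(1) by (simp add: in_keys_iff)
  finally show ?thesis by auto
qed

definition proj :: "'n set \<Rightarrow> ('n, 'k::comm_ring_1) mpoly \<Rightarrow> ('n, 'k) mpoly" where
  "proj F f = (\<Sum>\<alpha>\<in>{\<alpha>\<in>Poly_Mapping.keys f. Poly_Mapping.keys \<alpha> \<subseteq> F}. Poly_Mapping.single \<alpha> (Poly_Mapping.lookup f \<alpha>))"

lemma lookup_proj: "Poly_Mapping.lookup (proj F f) \<beta> = (if Poly_Mapping.keys \<beta> \<subseteq> F then Poly_Mapping.lookup f \<beta> else 0)"
proof -
  have "Poly_Mapping.lookup (proj F f) \<beta> = (\<Sum>\<alpha>\<in>{\<alpha>\<in>Poly_Mapping.keys f. Poly_Mapping.keys \<alpha> \<subseteq> F}. (Poly_Mapping.lookup f \<alpha> when \<alpha> = \<beta>))"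
    by (simp add: proj_def lookup_sum lookup_single)
  also have "\<dots> = (if \<beta> \<in> {\<alpha>\<in>Poly_Mapping.keys f. Poly_Mapping.keys \<alpha> \<subseteq> F} then Poly_Mapping.lookup f \<beta> else 0)"
    by (simp add: when_def sum.delta')
  also have "\<dots> = (if Poly_Mapping.keys \<beta> \<subseteq> F then Poly_Mapping.lookup f \<beta> else 0)"
    by (simp add: in_keys_iff)
  finally show ?thesis .
qed

lemma keys_proj: "\<alpha> \<in> Poly_Mapping.keys (proj F f) \<Longrightarrow> Poly_Mapping.keys \<alpha> \<subseteq> F"
  by (metis in_keys_iff lookup_proj)

lemma diff_proj_PF: "f - proj F f \<in> PF F"
  unfolding PF_def
proof (intro CollectI ballI)
  fix \<alpha> assume "\<alpha> \<in> Poly_Mapping.keys (f - proj F f)"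
  then have "Poly_Mapping.lookup f \<alpha> - Poly_Mapping.lookup (proj F f) \<alpha> \<noteq> 0"
    by (simp add: in_keys_iff lookup_minus)
  then show "\<not> Poly_Mapping.keys \<alpha> \<subseteq> F" by (simp add: lookup_proj split: if_splits)
qed

lemma proj_zero_iff: "proj F f = 0 \<longleftrightarrow> f \<in> PF F"
proof
  assume "proj F f = 0" then show "f \<in> PF F" using diff_proj_PF[of f F] by simp
next
  assume f: "f \<in> PF F"
  show "proj F f = 0"
  proof (rule poly_mapping_eqI)
    fix \<beta>
    show "Poly_Mapping.lookup (proj F f) \<beta> = Poly_Mapping.lookup 0 \<beta>"
      using f unfolding PF_def by (auto simp: lookup_proj in_keys_iff)
  qed
qed

lemma PF_prime: "is_prime_ideal (PF F :: ('n::finite, 'k::field) mpoly set)"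
  unfolding is_prime_ideal_def
proof (intro conjI allI impI)
  show "is_ideal (PF F :: ('n, 'k) mpoly set)" by (rule PF_ideal)
  have "(1::('n, 'k) mpoly) \<notin> PF F" by (simp add: PF_def)
  then show "PF F \<noteq> (UNIV :: ('n, 'k) mpoly set)" by blast
  fix a b :: "('n, 'k) mpoly" assume ab: "a * b \<in> PF F"
  let ?a = "proj F a" and ?b = "proj F b"
  have I: "is_ideal (PF F :: ('n, 'k) mpoly set)" by (rule PF_ideal)
  have a': "a - ?a \<in> PF F" and b': "b - ?b \<in> PF F" by (rule diff_proj_PF)+
  have eq: "?a * ?b = a * b - ?a * (b - ?b) - (a - ?a) * b" by (simp add: algebra_simps)
  have "?a * ?b \<in> PF F"
    unfolding eq
    by (intro ideal_diff[OF I] ab ideal_mult_left[OF I] ideal_mult_right[OF I] a' b')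
  moreover have "Poly_Mapping.keys \<alpha> \<subseteq> F" if "\<alpha> \<in> Poly_Mapping.keys (?a * ?b)" for \<alpha>
  proof -
    have "\<alpha> \<in> {x + y |x y. x \<in> Poly_Mapping.keys ?a \<and> y \<in> Poly_Mapping.keys ?b}"
      using keys_mult[of ?a ?b] that by (rule subsetD)
    then obtain x y where "\<alpha> = x + y" "x \<in> Poly_Mapping.keys ?a" "y \<in> Poly_Mapping.keys ?b" by blast
    then show ?thesis using keys_proj keys_add_nat by (metis Un_least)
  qed
  ultimately have "Poly_Mapping.keys (?a * ?b) = {}" unfolding PF_def by blast
  then have "?a * ?b = 0" by simp
  then have "?a = 0 \<or> ?b = 0" using mpoly_no_zero_div by blast
  then show "a \<in> PF F \<or> b \<in> PF F" by (simp add: proj_zero_iff)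
qed

lemma keys_pvar: "Poly_Mapping.keys (pvar v :: ('n, 'k::comm_ring_1) mpoly) = {Poly_Mapping.single v 1}"
  by (simp add: pvar_def)

lemma keys_single1: "Poly_Mapping.keys (Poly_Mapping.single v (1::nat)) = {v}"
  by simp

lemma monomial_factor:
  assumes "v \<in> Poly_Mapping.keys \<alpha>"
  shows "(Poly_Mapping.single \<alpha> c :: ('n, 'k::comm_ring_1) mpoly) = Poly_Mapping.single (\<alpha> - Poly_Mapping.single v 1) c * pvar v"
proof -
  have "\<alpha> - Poly_Mapping.single v 1 + Poly_Mapping.single v 1 = \<alpha>"
  proof (rule poly_mapping_eqI)
    fix w
    have "Poly_Mapping.lookup \<alpha> v \<noteq> 0" using assms by (simp add: in_keys_iff)
    then show "Poly_Mapping.lookup (\<alpha> - Poly_Mapping.single v 1 + Poly_Mapping.single v 1) w = Poly_Mapping.lookup \<alpha> w"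
      by (cases "v = w") (simp_all add: lookup_add lookup_minus lookup_single when_def)
  qed
  then show ?thesis by (simp add: pvar_def mult_single)
qed

lemma PF_sub_ideal:
  assumes J: "is_ideal J" and vars: "\<And>v. v \<notin> F \<Longrightarrow> pvar v \<in> J"
  shows "PF F \<subseteq> (J :: ('n, 'k::comm_ring_1) mpoly set)"
proof
  fix f :: "('n, 'k) mpoly" assume f: "f \<in> PF F"
  have "(\<Sum>\<alpha>\<in>Poly_Mapping.keys f. Poly_Mapping.single \<alpha> (Poly_Mapping.lookup f \<alpha>)) \<in> J"
  proof (rule ideal_sum[OF J], rule ballI)
    fix \<alpha> assume a: "\<alpha> \<in> Poly_Mapping.keys f"
    then obtain v where v: "v \<in> Poly_Mapping.keys \<alpha>" "v \<notin> F" using f unfolding PF_def by blast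
    show "Poly_Mapping.single \<alpha> (Poly_Mapping.lookup f \<alpha>) \<in> J"
      unfolding monomial_factor[OF v(1)] by (rule ideal_mult_left[OF J vars[OF v(2)]])
  qed
  then show "f \<in> J" using poly_sum_monomials[of f] by simp
qed

lemma PF_mono: "F \<subseteq> G \<Longrightarrow> PF G \<subseteq> PF F"
  unfolding PF_def by blast

lemma pvar_PF: "pvar v \<in> PF F \<longleftrightarrow> v \<notin> F"
  by (simp add: PF_def keys_pvar)

lemma PF_anti: "PF A \<subseteq> (PF B :: ('n, 'k::comm_ring_1) mpoly set) \<Longrightarrow> B \<subseteq> A"
proof
  fix v assume sub: "PF A \<subseteq> (PF B :: ('n, 'k) mpoly set)" and v: "v \<in> B"
  show "v \<in> A"
  proof (rule ccontr)
    assume "v \<notin> A"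
    then have "(pvar v :: ('n, 'k) mpoly) \<in> PF A" by (simp add: pvar_PF)
    then have "(pvar v :: ('n, 'k) mpoly) \<in> PF B" using sub by blast
    then show False using v by (simp add: pvar_PF)
  qed
qed

definition gens :: "'n::finite set set \<Rightarrow> ('n, 'k::comm_ring_1) mpoly set" where
  "gens K = {(\<Prod>v\<in>F. pvar v) | F. F \<notin> K}"

lemma SR_eq: "stanley_reisner_ideal K = ideal_gen (gens K)"
  by (simp add: stanley_reisner_ideal_def gens_def)

lemma SR_sub_PF:
  assumes cl: "\<forall>F\<in>K. \<forall>G. G \<subseteq> F \<longrightarrow> G \<in> K" and F: "F \<in> K"
  shows "stanley_reisner_ideal K \<subseteq> (PF F :: ('n::finite, 'k::comm_ring_1) mpoly set)"
  unfolding SR_eq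
proof (rule ideal_gen_min[OF PF_ideal], rule subsetI)
  fix g :: "('n, 'k) mpoly" assume "g \<in> gens K"
  then obtain N where N: "N \<notin> K" "g = (\<Prod>v\<in>N. pvar v)" by (auto simp: gens_def)
  have "\<not> N \<subseteq> F" using N cl F by blast
  then show "g \<in> PF F" unfolding N(2) by (simp add: prod_pvar PF_def keys_ind)
qed

lemma prime_prod:
  assumes Q: "is_prime_ideal Q" and fF: "finite F"
  shows "(\<Prod>v\<in>F. pvar v) \<in> (Q :: ('n, 'k::comm_ring_1) mpoly set) \<Longrightarrow> \<exists>v\<in>F. pvar v \<in> Q"
  using fF
proof (induct F rule: finite_induct)
  case empty
  then have "(1::('n, 'k) mpoly) \<in> Q" by simp
  then have "\<forall>r. r \<in> Q" using Q unfolding is_prime_ideal_def by (metis ideal_mult_right mult_1)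
  then show ?case using Q unfolding is_prime_ideal_def by blast
next
  case (insert x F)
  then have "pvar x * (\<Prod>v\<in>F. pvar v) \<in> Q" by simp
  then have "pvar x \<in> Q \<or> (\<Prod>v\<in>F. pvar v) \<in> Q" using Q unfolding is_prime_ideal_def by blast
  then show ?case using insert by blast
qed

definition facets :: "'n set set \<Rightarrow> 'n set set" where
  "facets K = {F\<in>K. \<forall>G\<in>K. F \<subseteq> G \<longrightarrow> G = F}"

lemma facet_above:
  assumes "F \<in> (K :: 'n::finite set set)"
  shows "\<exists>G\<in>facets K. F \<subseteq> G"
proof -
  have "finite K" by (rule finite_subset[of _ "Pow UNIV"]) auto
  from finite_has_maximal2[OF this assms] obtain G where "G \<in> K" "F \<subseteq> G" "\<forall>H\<in>K. G \<subseteq> H \<longrightarrow> G = H"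
    by blast
  then show ?thesis unfolding facets_def by blast
qed

lemma prime_contains_PF:
  assumes cl: "\<forall>F\<in>K. \<forall>G. G \<subseteq> F \<longrightarrow> G \<in> K" and Q: "is_prime_ideal Q"
    and sub: "stanley_reisner_ideal K \<subseteq> (Q :: ('n::finite, 'k::comm_ring_1) mpoly set)"
  shows "\<exists>G\<in>facets K. PF G \<subseteq> Q"
proof -
  define F where "F = {v. (pvar v :: ('n, 'k) mpoly) \<notin> Q}"
  have "F \<in> K"
  proof (rule ccontr)
    assume "F \<notin> K"
    then have "(\<Prod>v\<in>F. pvar v :: ('n, 'k) mpoly) \<in> gens K" unfolding gens_def by blast
    then have "(\<Prod>v\<in>F. pvar v :: ('n, 'k) mpoly) \<in> stanley_reisner_ideal K"
      using ideal_gen_base[of "gens K"] unfolding SR_eq by (rule subsetD[rotated])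
    then have "(\<Prod>v\<in>F. pvar v :: ('n, 'k) mpoly) \<in> Q" using sub by (rule subsetD[rotated])
    from prime_prod[OF Q _ this] obtain v where "v \<in> F" "pvar v \<in> Q" by auto
    then show False by (simp add: F_def)
  qed
  then obtain G where G: "G \<in> facets K" "F \<subseteq> G" using facet_above by blast
  have "PF F \<subseteq> Q"
  proof (rule PF_sub_ideal)
    show "is_ideal Q" using Q by (simp add: is_prime_ideal_def)
    fix v assume "v \<notin> F" then show "pvar v \<in> Q" by (simp add: F_def)
  qed
  then have "PF G \<subseteq> Q" using PF_mono[OF G(2)] by (rule order_trans[rotated])
  then show ?thesis using G(1) by (intro bexI)
qed


lemma minimal_primes_SR:
  assumes cl: "\<forall>F\<in>K. \<forall>G. G \<subseteq> F \<longrightarrow> G \<in> K"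
  shows "minimal_primes (stanley_reisner_ideal K :: ('n::finite, 'k::field) mpoly set) = PF ` facets K"
proof
  show "minimal_primes (stanley_reisner_ideal K :: ('n, 'k) mpoly set) \<subseteq> PF ` facets K"
  proof
    fix Q :: "('n, 'k) mpoly set" assume "Q \<in> minimal_primes (stanley_reisner_ideal K)"
    then have Q: "is_prime_ideal Q" "stanley_reisner_ideal K \<subseteq> Q"
      and mn: "\<And>Q'. is_prime_ideal Q' \<Longrightarrow> stanley_reisner_ideal K \<subseteq> Q' \<Longrightarrow> Q' \<subseteq> Q \<Longrightarrow> Q' = Q"
      unfolding minimal_primes_def by auto
    obtain G where G: "G \<in> facets K" "PF G \<subseteq> Q" using prime_contains_PF[OF cl Q] by auto
    have GK: "G \<in> K" using G by (simp add: facets_def)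
    have "PF G = Q" by (rule mn[OF PF_prime SR_sub_PF[OF cl GK] G(2)])
    then show "Q \<in> PF ` facets K" using G(1) by (intro image_eqI) auto
  qed
  show "PF ` facets K \<subseteq> minimal_primes (stanley_reisner_ideal K :: ('n, 'k) mpoly set)"
  proof
    fix Q :: "('n, 'k) mpoly set" assume "Q \<in> PF ` facets K"
    then obtain G where G: "G \<in> facets K" "Q = PF G" by auto
    have GK: "G \<in> K" using G by (simp add: facets_def)
    show "Q \<in> minimal_primes (stanley_reisner_ideal K)"
      unfolding minimal_primes_def
    proof (intro CollectI conjI allI impI)
      show "is_prime_ideal Q" unfolding G(2) by (rule PF_prime)
      show "stanley_reisner_ideal K \<subseteq> Q" unfolding G(2) by (rule SR_sub_PF[OF cl GK])
      fix Q' :: "('n, 'k) mpoly set" assume Q': "is_prime_ideal Q' \<and> stanley_reisner_ideal K \<subseteq> Q' \<and> Q' \<subseteq> Q"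
      have "\<exists>G\<in>facets K. PF G \<subseteq> Q'" using Q' by (intro prime_contains_PF[OF cl]) auto
      then obtain G' where G': "G' \<in> facets K" "PF G' \<subseteq> Q'" by auto
      have "PF G' \<subseteq> (PF G :: ('n, 'k) mpoly set)" using G'(2) Q' unfolding G(2) by (meson order_trans)
      then have "G \<subseteq> G'" by (rule PF_anti)
      then have "G' = G" using G(1) G'(1) unfolding facets_def by auto
      then have "Q \<subseteq> Q'" using G'(2) G(2) by simp
      then show "Q' = Q" using Q' by (intro antisym) auto
    qed
  qed
qed

lemma radical_prime: "is_prime_ideal P \<Longrightarrow> radical P = P"
proof
  assume P: "is_prime_ideal P"
  have pr: "\<And>a b. a * b \<in> P \<Longrightarrow> a \<in> P \<or> b \<in> P" and nU: "P \<noteq> UNIV" and I: "is_ideal P"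
    using P unfolding is_prime_ideal_def by auto
  show "radical P \<subseteq> P"
  proof
    fix f assume "f \<in> radical P"
    then obtain m where "f ^ m \<in> P" unfolding radical_def by auto
    then show "f \<in> P"
    proof (induct m)
      case 0
      then have one: "1 \<in> P" by simp
      have "r \<in> P" for r using ideal_mult_left[OF I one, of r] by simp
      then have "P = UNIV" by auto
      then show ?case using nU by simp
    next
      case (Suc m)
      then have "f * f ^ m \<in> P" by simp
      then have "f \<in> P \<or> f ^ m \<in> P" by (rule pr)
      then show ?case using Suc(1) by auto
    qed
  qed
  show "P \<subseteq> radical P"
  proof
    fix f assume "f \<in> P"
    then have "f ^ 1 \<in> P" by simp
    then show "f \<in> radical P" unfolding radical_def by (intro CollectI exI)
  qed
qed

lemma radical_mono: "J \<subseteq> J' \<Longrightarrow> radical J \<subseteq> radical J'"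
  unfolding radical_def by auto

lemma sub_radical: "J \<subseteq> radical J"
proof
  fix f assume "f \<in> J"
  then have "f ^ 1 \<in> J" by simp
  then show "f \<in> radical J" unfolding radical_def by (intro CollectI exI)
qed

lemma irrelevant_PF: "(irrelevant_ideal :: ('n, 'k::comm_ring_1) mpoly set) = PF {}"
proof
  show "(irrelevant_ideal :: ('n, 'k) mpoly set) \<subseteq> PF {}"
  proof
    fix f :: "('n, 'k) mpoly" assume "f \<in> irrelevant_ideal"
    then have "0 \<notin> Poly_Mapping.keys f" unfolding irrelevant_ideal_def by (simp add: in_keys_iff)
    then show "f \<in> PF {}" unfolding PF_def by auto
  qed
  show "PF {} \<subseteq> (irrelevant_ideal :: ('n, 'k) mpoly set)"
  proof
    fix f :: "('n, 'k) mpoly" assume "f \<in> PF {}"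
    then have "0 \<notin> Poly_Mapping.keys f" unfolding PF_def by auto
    then show "f \<in> irrelevant_ideal" unfolding irrelevant_ideal_def by (simp add: in_keys_iff)
  qed
qed


lemma delta_face:
  fixes Gf :: "nat \<Rightarrow> 'n::finite set" and p :: "nat \<Rightarrow> ('n, 'k::field) mpoly set"
  assumes pG: "\<forall>i\<in>S. p i = PF (Gf i)" and Sne: "S \<noteq> {}"
  shows "radical (ideal_gen (\<Union>i\<in>S. p i)) \<noteq> irrelevant_ideal \<longleftrightarrow> (\<exists>x. \<forall>i\<in>S. x \<in> Gf i)"
proof
  assume "\<exists>x. \<forall>i\<in>S. x \<in> Gf i"
  then obtain x where x: "\<forall>i\<in>S. x \<in> Gf i" by blast
  have "(\<Union>i\<in>S. p i) \<subseteq> PF {x}"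
  proof
    fix f assume "f \<in> (\<Union>i\<in>S. p i)"
    then obtain i where i: "i \<in> S" "f \<in> p i" by auto
    then have "f \<in> PF (Gf i)" using pG by simp
    moreover have "{x} \<subseteq> Gf i" using x i(1) by simp
    then have "PF (Gf i) \<subseteq> PF {x}" by (rule PF_mono)
    ultimately show "f \<in> PF {x}" by (rule subsetD[rotated])
  qed
  then have "ideal_gen (\<Union>i\<in>S. p i) \<subseteq> PF {x}" by (rule ideal_gen_min[OF PF_ideal])
  then have "radical (ideal_gen (\<Union>i\<in>S. p i)) \<subseteq> radical (PF {x})" by (rule radical_mono)
  also have "radical (PF {x}) = (PF {x} :: ('n, 'k) mpoly set)" by (rule radical_prime[OF PF_prime])
  finally have R: "radical (ideal_gen (\<Union>i\<in>S. p i)) \<subseteq> PF {x}" .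
  have "(pvar x :: ('n, 'k) mpoly) \<in> irrelevant_ideal" by (simp add: irrelevant_PF pvar_PF)
  moreover have "(pvar x :: ('n, 'k) mpoly) \<notin> PF {x}" by (simp add: pvar_PF)
  ultimately show "radical (ideal_gen (\<Union>i\<in>S. p i)) \<noteq> irrelevant_ideal" using R by auto
next
  assume ne: "radical (ideal_gen (\<Union>i\<in>S. p i)) \<noteq> irrelevant_ideal"
  show "\<exists>x. \<forall>i\<in>S. x \<in> Gf i"
  proof (rule ccontr)
    assume nx: "\<not> (\<exists>x. \<forall>i\<in>S. x \<in> Gf i)"
    have "(\<Union>i\<in>S. p i) \<subseteq> PF {}"
    proof
      fix f assume "f \<in> (\<Union>i\<in>S. p i)"
      then obtain i where i: "i \<in> S" "f \<in> p i" by auto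
      then have "f \<in> PF (Gf i)" using pG by simp
      moreover have "PF (Gf i) \<subseteq> PF {}" by (rule PF_mono) simp
      ultimately show "f \<in> PF {}" by (rule subsetD[rotated])
    qed
    then have "ideal_gen (\<Union>i\<in>S. p i) \<subseteq> PF {}" by (rule ideal_gen_min[OF PF_ideal])
    then have "radical (ideal_gen (\<Union>i\<in>S. p i)) \<subseteq> radical (PF {})" by (rule radical_mono)
    also have "radical (PF {}) = (PF {} :: ('n, 'k) mpoly set)" by (rule radical_prime[OF PF_prime])
    finally have R1: "radical (ideal_gen (\<Union>i\<in>S. p i)) \<subseteq> PF {}" .
    have "PF {} \<subseteq> ideal_gen (\<Union>i\<in>S. p i)"
    proof (rule PF_sub_ideal[OF ideal_gen_ideal])
      fix v
      obtain i where i: "i \<in> S" "v \<notin> Gf i" using nx by blast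
      then have "pvar v \<in> p i" using pG by (simp add: pvar_PF)
      then have "pvar v \<in> (\<Union>i\<in>S. p i)" using i(1) by auto
      then show "pvar v \<in> ideal_gen (\<Union>i\<in>S. p i)" using ideal_gen_base by (rule subsetD[rotated])
    qed
    also have "\<dots> \<subseteq> radical (ideal_gen (\<Union>i\<in>S. p i))" by (rule sub_radical)
    finally have "radical (ideal_gen (\<Union>i\<in>S. p i)) = PF {}" using R1 by (rule antisym[rotated])
    then show False using ne by (simp add: irrelevant_PF)
  qed
qed

lemma delta_eq:
  fixes Gf :: "nat \<Rightarrow> 'n::finite set" and p :: "nat \<Rightarrow> ('n, 'k::field) mpoly set"
  assumes pG: "\<forall>i<m. p i = PF (Gf i)"
  shows "Delta_complex m p = {S. S \<subseteq> {..<m} \<and> (S = {} \<or> (\<exists>x. \<forall>i\<in>S. x \<in> Gf i))}"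
  unfolding Delta_complex_def
proof (intro Collect_cong conj_cong refl)
  fix S assume S: "S \<subseteq> {..<m}"
  show "(S = {} \<or> radical (ideal_gen (\<Union>i\<in>S. p i)) \<noteq> irrelevant_ideal) = (S = {} \<or> (\<exists>x. \<forall>i\<in>S. x \<in> Gf i))"
  proof (cases "S = {}")
    case False
    have "\<forall>i\<in>S. p i = PF (Gf i)" using pG S by auto
    then show ?thesis using delta_face[of S p Gf] False by simp
  qed simp
qed

lemma vs_fun: "vector_space (\<lambda>(c::'k::field) (f::'a \<Rightarrow> 'k). \<lambda>x. c * f x)"
  by (simp add: vector_space_def fun_eq_iff algebra_simps)

lemma psi_mult:
  fixes r f :: "('n::finite, 'k::field) mpoly"
  assumes cl: "\<forall>F\<in>K. \<forall>G. G \<subseteq> F \<longrightarrow> G \<in> K"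
    and f: "f \<in> monoI K" and N: "N \<notin> K" "\<forall>u\<in>N. N - {u} \<in> K"
  shows "Poly_Mapping.lookup (r * f) (ind N) = Poly_Mapping.lookup r 0 * Poly_Mapping.lookup f (ind N)"
proof -
  have fN: "finite N" by simp
  have key: "x = 0 \<and> y = ind N" if x: "x \<in> Poly_Mapping.keys r" and y: "y \<in> Poly_Mapping.keys f"
    and e: "ind N = x + y" for x y
  proof -
    have yK: "Poly_Mapping.keys y \<notin> K" using f y unfolding monoI_def by blast
    have "Poly_Mapping.keys y \<subseteq> Poly_Mapping.keys (ind N)" unfolding e keys_add_nat by (rule Un_upper2)
    then have yN: "Poly_Mapping.keys y \<subseteq> N" using keys_ind[OF fN] by simp
    have yN2: "Poly_Mapping.keys y = N"
    proof (rule ccontr)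
      assume "Poly_Mapping.keys y \<noteq> N"
      then obtain u where u: "u \<in> N" "u \<notin> Poly_Mapping.keys y" using yN by blast
      then have "Poly_Mapping.keys y \<subseteq> N - {u}" using yN by blast
      moreover have "N - {u} \<in> K" using N(2) u(1) by blast
      ultimately have "Poly_Mapping.keys y \<in> K" using cl by blast
      then show False using yK by simp
    qed
    have yi: "y = ind N"
    proof (rule poly_mapping_eqI)
      fix w
      have le: "Poly_Mapping.lookup y w \<le> Poly_Mapping.lookup (ind N) w"
        using e by (simp add: lookup_add)
      show "Poly_Mapping.lookup y w = Poly_Mapping.lookup (ind N) w"
      proof (cases "w \<in> N")
        case True
        then have "w \<in> Poly_Mapping.keys y" using yN2 by simp
        then have "Poly_Mapping.lookup y w \<noteq> 0" by (simp add: in_keys_iff)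
        then show ?thesis using le True by (simp add: lookup_ind[OF fN])
      next
        case False
        then show ?thesis using le by (simp add: lookup_ind[OF fN])
      qed
    qed
    have "x = 0"
    proof (rule poly_mapping_eqI)
      fix w show "Poly_Mapping.lookup x w = Poly_Mapping.lookup 0 w"
        using arg_cong[OF e, of "\<lambda>z. Poly_Mapping.lookup z w"] yi by (simp add: lookup_add)
    qed
    then show ?thesis using yi by simp
  qed
  have "Poly_Mapping.lookup (r * f) (ind N) = (\<Sum>x\<in>Poly_Mapping.keys r. \<Sum>y\<in>Poly_Mapping.keys f.
        (if ind N = x + y then Poly_Mapping.lookup r x * Poly_Mapping.lookup f y else 0))"
    by (rule lookup_mult_keys)
  also have "\<dots> = (\<Sum>x\<in>Poly_Mapping.keys r. \<Sum>y\<in>Poly_Mapping.keys f.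
        (if x = 0 \<and> y = ind N then Poly_Mapping.lookup r x * Poly_Mapping.lookup f y else 0))"
    by (intro sum.cong refl) (use key in auto)
  also have "\<dots> = (\<Sum>x\<in>Poly_Mapping.keys r. if x = 0 then Poly_Mapping.lookup r 0 * Poly_Mapping.lookup f (ind N) else 0)"
  proof (intro sum.cong refl)
    fix x assume "x \<in> Poly_Mapping.keys r"
    show "(\<Sum>y\<in>Poly_Mapping.keys f. (if x = 0 \<and> y = ind N then Poly_Mapping.lookup r x * Poly_Mapping.lookup f y else 0)) =
      (if x = 0 then Poly_Mapping.lookup r 0 * Poly_Mapping.lookup f (ind N) else 0)"
      by (cases "x = 0") (auto simp: sum.delta' in_keys_iff)
  qed
  also have "\<dots> = Poly_Mapping.lookup r 0 * Poly_Mapping.lookup f (ind N)"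
    by (auto simp: sum.delta' in_keys_iff)
  finally show ?thesis .
qed

interpretation fv: vector_space "\<lambda>(c::'k::field) (f::'a \<Rightarrow> 'k). \<lambda>x. c * f x"
  by (rule vs_fun)

lemma SR_ideal: "is_ideal (stanley_reisner_ideal K)"
  unfolding stanley_reisner_ideal_def by (rule ideal_gen_ideal)

lemma SR_sub_monoI:
  assumes cl: "\<forall>F\<in>K. \<forall>G. G \<subseteq> F \<longrightarrow> G \<in> K"
  shows "stanley_reisner_ideal K \<subseteq> (monoI K :: ('n::finite, 'k::comm_ring_1) mpoly set)"
  unfolding SR_eq
proof (rule ideal_gen_min[OF monoI_ideal[OF cl]], rule subsetI)
  fix g :: "('n, 'k) mpoly" assume "g \<in> gens K"
  then obtain N where N: "N \<notin> K" "g = (\<Prod>v\<in>N. pvar v)" unfolding gens_def by blast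
  then show "g \<in> monoI K" unfolding N(2) by (simp add: prod_pvar monoI_def keys_ind)
qed

lemma count_bound:
  fixes gs :: "('n::finite, 'k::field) mpoly list"
  assumes cl: "\<forall>F\<in>K. \<forall>G. G \<subseteq> F \<longrightarrow> G \<in> K"
    and gen: "ideal_gen (set gs) = stanley_reisner_ideal K"
  shows "card {T. T \<notin> K \<and> (\<forall>u\<in>T. T - {u} \<in> K)} \<le> length gs"
proof -
  define M where "M = {T. T \<notin> K \<and> (\<forall>u\<in>T. T - {u} \<in> K)}"
  have fM: "finite M" by simp
  define \<psi> where "\<psi> f = (\<lambda>N. if N \<in> M then Poly_Mapping.lookup f (ind N) else (0::'k))" for f :: "('n, 'k) mpoly"
  let ?SR = "stanley_reisner_ideal K :: ('n, 'k) mpoly set"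
  let ?V = "fv.span (\<psi> ` set gs)"
  define J where "J = {f. f \<in> ?SR \<and> \<psi> f \<in> ?V}"
  have SRI: "is_ideal ?SR" by (rule SR_ideal)
  have SRm: "?SR \<subseteq> monoI K" by (rule SR_sub_monoI[OF cl])
  have psi0: "\<psi> 0 = 0" by (simp add: \<psi>_def fun_eq_iff)
  have psiadd: "\<psi> (a + b) = \<psi> a + \<psi> b" for a b by (simp add: \<psi>_def fun_eq_iff lookup_add)
  have psimult: "\<psi> (r * a) = (\<lambda>x. Poly_Mapping.lookup r 0 * \<psi> a x)" if a: "a \<in> ?SR" for r a
  proof
    fix N show "\<psi> (r * a) N = Poly_Mapping.lookup r 0 * \<psi> a N"
    proof (cases "N \<in> M")
      case True
      then have "N \<notin> K" "\<forall>u\<in>N. N - {u} \<in> K" by (auto simp: M_def)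
      moreover have "a \<in> monoI K" using a SRm by (rule subsetD[rotated])
      ultimately show ?thesis using True by (simp add: \<psi>_def psi_mult[OF cl])
    qed (simp add: \<psi>_def)
  qed
  have JI: "is_ideal J"
    unfolding is_ideal_def
  proof (intro conjI ballI allI)
    show "0 \<in> J" unfolding J_def using SRI by (simp add: is_ideal_def psi0 fv.span_zero)
    fix a b assume a: "a \<in> J" and b: "b \<in> J"
    then show "a + b \<in> J" unfolding J_def using SRI by (simp add: is_ideal_def psiadd fv.span_add)
  next
    fix r a assume a: "a \<in> J"
    then have aS: "a \<in> ?SR" and aV: "\<psi> a \<in> ?V" by (simp_all add: J_def)
    have "r * a \<in> ?SR" using SRI aS by (simp add: is_ideal_def)
    moreover have "\<psi> (r * a) \<in> ?V" unfolding psimult[OF aS] using aV by (rule fv.span_scale)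
    ultimately show "r * a \<in> J" by (simp add: J_def)
  qed
  have "set gs \<subseteq> J"
  proof
    fix g assume g: "g \<in> set gs"
    then have "g \<in> ?SR" using ideal_gen_base[of "set gs"] gen by auto
    moreover have "\<psi> g \<in> ?V" using g by (intro fv.span_base) simp
    ultimately show "g \<in> J" by (simp add: J_def)
  qed
  then have "ideal_gen (set gs) \<subseteq> J" by (rule ideal_gen_min[OF JI])
  then have SRJ: "?SR \<subseteq> J" using gen by simp
  define \<delta> where "\<delta> N = (\<lambda>N'. if N' = N then (1::'k) else 0)" for N :: "'n set"
  have deltaV: "\<delta> N \<in> ?V" if N: "N \<in> M" for N
  proof -
    have "(\<Prod>v\<in>N. pvar v :: ('n, 'k) mpoly) \<in> gens K" using N unfolding gens_def M_def by blast
    then have "(\<Prod>v\<in>N. pvar v :: ('n, 'k) mpoly) \<in> ?SR" unfolding SR_eq using ideal_gen_base by blast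
    then have "Poly_Mapping.single (ind N) 1 \<in> ?SR" by (simp add: prod_pvar)
    then have "Poly_Mapping.single (ind N) 1 \<in> J" using SRJ by (rule subsetD[rotated])
    then have "\<psi> (Poly_Mapping.single (ind N) 1) \<in> ?V" by (simp add: J_def)
    moreover have "\<psi> (Poly_Mapping.single (ind N) 1) = \<delta> N"
    proof
      fix N'
      have "ind N = ind N' \<longleftrightarrow> N = N'" by (metis keys_ind finite)
      then show "\<psi> (Poly_Mapping.single (ind N) 1) N' = \<delta> N N'"
        using N by (auto simp: \<psi>_def \<delta>_def lookup_single when_def)
    qed
    ultimately show ?thesis by simp
  qed
  have indep: "fv.independent (\<delta> ` M)"
    unfolding fv.dependent_def
  proof
    assume "\<exists>a\<in>\<delta> ` M. a \<in> fv.span (\<delta> ` M - {a})"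
    then obtain N where N: "N \<in> M" "\<delta> N \<in> fv.span (\<delta> ` M - {\<delta> N})" by blast
    have "fv.span (\<delta> ` M - {\<delta> N}) \<subseteq> {h. h N = 0}"
    proof (rule fv.span_minimal)
      show "\<delta> ` M - {\<delta> N} \<subseteq> {h. h N = 0}" by (auto simp: \<delta>_def)
      show "fv.subspace {h :: 'n set \<Rightarrow> 'k. h N = 0}" unfolding fv.subspace_def by simp
    qed
    then have "\<delta> N N = 0" using N(2) by blast
    then show False by (simp add: \<delta>_def)
  qed
  have "\<delta> ` M \<subseteq> ?V" using deltaV by blast
  from fv.independent_span_bound[OF _ indep this]
  have "card (\<delta> ` M) \<le> card (\<psi> ` set gs)" by simp
  moreover have "inj_on \<delta> M" unfolding inj_on_def \<delta>_def by (metis zero_neq_one)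
  ultimately have "card M \<le> card (\<psi> ` set gs)" by (simp add: card_image)
  also have "\<dots> \<le> card (set gs)" by (rule card_image_le) simp
  also have "\<dots> \<le> length gs" by (rule card_length)
  finally show ?thesis by (simp add: M_def)
qed


theorem corollary3p7:
  fixes K :: "'n::finite set set"
    and t :: nat
    and gs :: "('n, 'k::field) mpoly list"
    and m :: nat
    and p :: "nat \<Rightarrow> ('n, 'k) mpoly set"
  assumes "simplicial_complex_on K UNIV"
    and "t \<le> CARD('n)"
    and "length gs = CARD('n) - t"
    and "ideal_gen (set gs) = (stanley_reisner_ideal K :: ('n, 'k) mpoly set)"
    and "bij_betw p {..<m} (minimal_primes (stanley_reisner_ideal K :: ('n, 'k) mpoly set))"
  shows "\<forall>i. i + 2 \<le> t \<longrightarrow> reduced_homology_vanishes TYPE('k) (Delta_complex m p) i"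
proof (intro allI impI)
  fix i assume it: "i + 2 \<le> t"
  have cl: "\<forall>F\<in>K. \<forall>G. G \<subseteq> F \<longrightarrow> G \<in> K" and sing: "\<forall>v. {v} \<in> K"
    using assms(1) unfolding simplicial_complex_on_def by auto
  have emp: "{} \<in> K" using cl sing by blast
  have mp: "minimal_primes (stanley_reisner_ideal K :: ('n, 'k) mpoly set) = PF ` facets K"
    by (rule minimal_primes_SR[OF cl])
  have bij: "bij_betw p {..<m} ((PF :: 'n set \<Rightarrow> ('n, 'k) mpoly set) ` facets K)"
    using assms(5) mp by simp
  have PFinj: "A = B" if "(PF A :: ('n, 'k) mpoly set) = PF B" for A B :: "'n set"
  proof -
    have h1: "(PF A :: ('n, 'k) mpoly set) \<subseteq> PF B" using that by simp
    have h2: "(PF B :: ('n, 'k) mpoly set) \<subseteq> PF A" using that by simp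
    have "B \<subseteq> A" using h1 by (rule PF_anti)
    moreover have "A \<subseteq> B" using h2 by (rule PF_anti)
    ultimately show ?thesis by auto
  qed
  define Gf where "Gf i = (SOME G. G \<in> facets K \<and> p i = PF G)" for i
  have Gf: "Gf j \<in> facets K \<and> p j = PF (Gf j)" if "j < m" for j
  proof -
    have "p j \<in> PF ` facets K" using bij that unfolding bij_betw_def by auto
    then have "\<exists>G. G \<in> facets K \<and> p j = PF G" by auto
    then show ?thesis unfolding Gf_def by (rule someI_ex)
  qed
  have Gfsurj: "\<exists>j<m. Gf j = F" if F: "F \<in> facets K" for F
  proof -
    have "PF F \<in> p ` {..<m}" using bij F unfolding bij_betw_def by auto
    then obtain j where j: "j < m" "p j = PF F" by auto
    then have "PF (Gf j) = (PF F :: ('n, 'k) mpoly set)" using Gf[OF j(1)] by simp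
    then show ?thesis using j(1) PFinj by blast
  qed
  have pG: "\<forall>j<m. p j = PF (Gf j)" using Gf by blast
  have D: "Delta_complex m p = nerve Gf {..<m}"
    unfolding delta_eq[OF pG] nerve_def by simp
  have Kc: "cplx Gf {..<m} UNIV = K"
  proof
    show "cplx Gf {..<m} UNIV \<subseteq> K"
    proof
      fix T assume "T \<in> cplx Gf {..<m} UNIV"
      then have "T = {} \<or> (\<exists>j<m. T \<subseteq> Gf j)" unfolding cplx_def by auto
      then show "T \<in> K"
      proof
        assume "T = {}" then show ?thesis using emp by simp
      next
        assume "\<exists>j<m. T \<subseteq> Gf j"
        then obtain j where "j < m" "T \<subseteq> Gf j" by blast
        moreover have "Gf j \<in> K" using Gf[OF \<open>j < m\<close>] unfolding facets_def by blast
        ultimately show ?thesis using cl by blast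
      qed
    qed
    show "K \<subseteq> cplx Gf {..<m} UNIV"
    proof
      fix T assume T: "T \<in> K"
      obtain F where F: "F \<in> facets K" "T \<subseteq> F" using facet_above[OF T] by blast
      obtain j where "j < m" "Gf j = F" using Gfsurj[OF F(1)] by blast
      then show "T \<in> cplx Gf {..<m} UNIV" unfolding cplx_def using F(2) by auto
    qed
  qed
  have mnfK: "mnf K UNIV = {T. T \<notin> K \<and> (\<forall>u\<in>T. T - {u} \<in> K)}"
    unfolding mnf_def by simp
  have s: "card (mnf K UNIV) \<le> CARD('n) - t"
    using count_bound[OF cl assms(4)] assms(3) unfolding mnfK by simp
  have "hv TYPE('k) (nerve Gf {..<m}) (i + 1)"
  proof (rule nerve_hv)
    show "finite (UNIV :: 'n set)" by simp
    show "finite {..<m}" by simp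
    show "\<forall>j\<in>{..<m}. Gf j \<subseteq> UNIV" by simp
    show "i + 1 + 1 + card (mnf (cplx Gf {..<m} UNIV) UNIV) \<le> card (UNIV :: 'n set)"
      using s it assms(2) unfolding Kc by simp
  qed
  then show "reduced_homology_vanishes TYPE('k) (Delta_complex m p) i"
    unfolding D hv_def reduced_homology_vanishes_def by simp
qed

end
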